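(* Let $\Bbbk$ be a field of characteristic $0$, let $\alpha,\beta\in\Bbbk$ with $\beta\neq0$, and let $A=A(\alpha,\beta)=\Bbbk\langle x,y\rangle/(x^2y-\alpha xyx-\beta yx^2,\ xy^2-\alpha yxy-\beta y^2x)$ be a noetherian PI down-up algebra. Then every $\phi\in\mathrm{Oz}(A)$ satisfies $\phi(x)\in\Bbbk x$ and $\phi(y)\in\Bbbk y$. As a consequence, $\mathrm{Oz}(A)$ is abelian.
   Context: $\mathrm{Oz}(A)$ is the group of algebra automorphisms of $A$ fixing the center of $A$ pointwise. $A(\alpha,\beta)$ is PI iff both roots of $w^2-\alpha w-\beta=0$ are roots of unity. *)

theory Defs
  imports "HOL-Library.Poly_Mapping"
begin

text \<open>Noncommutative polynomials: finitely supported functions from words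
  (lists of variable indices) to the field.  Multiplication is the
  concatenation convolution.\<close>

type_synonym 'k ncpoly = "nat list \<Rightarrow>\<^sub>0 'k"

definition nc_mult :: "'k::comm_ring_1 ncpoly \<Rightarrow> 'k ncpoly \<Rightarrow> 'k ncpoly" where
  "nc_mult p q = (\<Sum>u\<in>Poly_Mapping.keys p. \<Sum>v\<in>Poly_Mapping.keys q.
       Poly_Mapping.single (u @ v) (Poly_Mapping.lookup p u * Poly_Mapping.lookup q v))"

definition nc_one :: "'k::comm_ring_1 ncpoly" where
  "nc_one = Poly_Mapping.single [] 1"

definition nc_smul :: "'k::comm_ring_1 \<Rightarrow> 'k ncpoly \<Rightarrow> 'k ncpoly" where
  "nc_smul c p = nc_mult (Poly_Mapping.single [] c) p"

definition nc_var :: "nat \<Rightarrow> 'k::comm_ring_1 ncpoly" where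
  "nc_var i = Poly_Mapping.single [i] 1"

definition nc_subst :: "(nat \<Rightarrow> 'k::comm_ring_1 ncpoly) \<Rightarrow> 'k ncpoly \<Rightarrow> 'k ncpoly" where
  "nc_subst s f = (\<Sum>w\<in>Poly_Mapping.keys f. nc_smul (Poly_Mapping.lookup f w)
       (foldr (\<lambda>i acc. nc_mult (s i) acc) w nc_one))"

section \<open>The down-up algebra A(alpha, beta) = k<x,y>/(relations), x = X_0, y = X_1\<close>

definition du_rel1 :: "'k::comm_ring_1 \<Rightarrow> 'k \<Rightarrow> 'k ncpoly" where
  "du_rel1 \<alpha> \<beta> = Poly_Mapping.single [0,0,1] 1 - Poly_Mapping.single [0,1,0] \<alpha>
                  - Poly_Mapping.single [1,0,0] \<beta>"   (* x^2 y - alpha xyx - beta y x^2 *)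

definition du_rel2 :: "'k::comm_ring_1 \<Rightarrow> 'k \<Rightarrow> 'k ncpoly" where
  "du_rel2 \<alpha> \<beta> = Poly_Mapping.single [0,1,1] 1 - Poly_Mapping.single [1,0,1] \<alpha>
                  - Poly_Mapping.single [1,1,0] \<beta>"   (* x y^2 - alpha yxy - beta y^2 x *)

text \<open>The two-sided ideal generated by the two relations (inside k<x,y> sitting in
  the free algebra on countably many variables; x, y are X_0, X_1 and only words
  in 0,1 are relevant).\<close>
inductive_set du_ideal :: "'k::comm_ring_1 \<Rightarrow> 'k \<Rightarrow> 'k ncpoly set" for \<alpha> \<beta> where
  zero: "0 \<in> du_ideal \<alpha> \<beta>"
| add: "p \<in> du_ideal \<alpha> \<beta> \<Longrightarrow> q \<in> du_ideal \<alpha> \<beta> \<Longrightarrow> p + q \<in> du_ideal \<alpha> \<beta>"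
| gen: "r \<in> {du_rel1 \<alpha> \<beta>, du_rel2 \<alpha> \<beta>} \<Longrightarrow> nc_mult (nc_mult a r) b \<in> du_ideal \<alpha> \<beta>"

definition du_words :: "'k::comm_ring_1 ncpoly set" where
  "du_words = {p. \<forall>w\<in>Poly_Mapping.keys p. set w \<subseteq> {0,1}}"

text \<open>Elements of A are cosets p + I for p in k<x,y>.\<close>
definition du_class :: "'k::comm_ring_1 \<Rightarrow> 'k \<Rightarrow> 'k ncpoly \<Rightarrow> 'k ncpoly set" where
  "du_class \<alpha> \<beta> p = {q \<in> du_words. q - p \<in> du_ideal \<alpha> \<beta>}"

definition du_carrier :: "'k::comm_ring_1 \<Rightarrow> 'k \<Rightarrow> 'k ncpoly set set" where
  "du_carrier \<alpha> \<beta> = du_class \<alpha> \<beta> ` du_words"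

definition du_add :: "'k::comm_ring_1 \<Rightarrow> 'k \<Rightarrow> 'k ncpoly set \<Rightarrow> 'k ncpoly set \<Rightarrow> 'k ncpoly set" where
  "du_add \<alpha> \<beta> P Q = du_class \<alpha> \<beta> ((SOME p. p \<in> P) + (SOME q. q \<in> Q))"

definition du_mult :: "'k::comm_ring_1 \<Rightarrow> 'k \<Rightarrow> 'k ncpoly set \<Rightarrow> 'k ncpoly set \<Rightarrow> 'k ncpoly set" where
  "du_mult \<alpha> \<beta> P Q = du_class \<alpha> \<beta> (nc_mult (SOME p. p \<in> P) (SOME q. q \<in> Q))"

definition du_smul :: "'k::comm_ring_1 \<Rightarrow> 'k \<Rightarrow> 'k \<Rightarrow> 'k ncpoly set \<Rightarrow> 'k ncpoly set" where
  "du_smul \<alpha> \<beta> c P = du_class \<alpha> \<beta> (nc_smul c (SOME p. p \<in> P))"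

definition du_zero :: "'k::comm_ring_1 \<Rightarrow> 'k \<Rightarrow> 'k ncpoly set" where
  "du_zero \<alpha> \<beta> = du_class \<alpha> \<beta> 0"

definition du_one :: "'k::comm_ring_1 \<Rightarrow> 'k \<Rightarrow> 'k ncpoly set" where
  "du_one \<alpha> \<beta> = du_class \<alpha> \<beta> nc_one"

definition du_x :: "'k::comm_ring_1 \<Rightarrow> 'k \<Rightarrow> 'k ncpoly set" where
  "du_x \<alpha> \<beta> = du_class \<alpha> \<beta> (nc_var 0)"

definition du_y :: "'k::comm_ring_1 \<Rightarrow> 'k \<Rightarrow> 'k ncpoly set" where
  "du_y \<alpha> \<beta> = du_class \<alpha> \<beta> (nc_var 1)"

definition du_is_aut :: "'k::comm_ring_1 \<Rightarrow> 'k \<Rightarrow> ('k ncpoly set \<Rightarrow> 'k ncpoly set) \<Rightarrow> bool" where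
  "du_is_aut \<alpha> \<beta> \<phi> \<longleftrightarrow>
     bij_betw \<phi> (du_carrier \<alpha> \<beta>) (du_carrier \<alpha> \<beta>)
   \<and> (\<forall>P\<in>du_carrier \<alpha> \<beta>. \<forall>Q\<in>du_carrier \<alpha> \<beta>.
        \<phi> (du_add \<alpha> \<beta> P Q) = du_add \<alpha> \<beta> (\<phi> P) (\<phi> Q)
      \<and> \<phi> (du_mult \<alpha> \<beta> P Q) = du_mult \<alpha> \<beta> (\<phi> P) (\<phi> Q))
   \<and> (\<forall>c. \<forall>P\<in>du_carrier \<alpha> \<beta>. \<phi> (du_smul \<alpha> \<beta> c P) = du_smul \<alpha> \<beta> c (\<phi> P))
   \<and> \<phi> (du_one \<alpha> \<beta>) = du_one \<alpha> \<beta>"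

definition du_center :: "'k::comm_ring_1 \<Rightarrow> 'k \<Rightarrow> 'k ncpoly set set" where
  "du_center \<alpha> \<beta> = {Z \<in> du_carrier \<alpha> \<beta>.
      \<forall>P\<in>du_carrier \<alpha> \<beta>. du_mult \<alpha> \<beta> Z P = du_mult \<alpha> \<beta> P Z}"

definition du_Oz :: "'k::comm_ring_1 \<Rightarrow> 'k \<Rightarrow> ('k ncpoly set \<Rightarrow> 'k ncpoly set) set" where
  "du_Oz \<alpha> \<beta> = {\<phi>. du_is_aut \<alpha> \<beta> \<phi> \<and> (\<forall>Z\<in>du_center \<alpha> \<beta>. \<phi> Z = Z)}"

definition du_left_ideal :: "'k::comm_ring_1 \<Rightarrow> 'k \<Rightarrow> 'k ncpoly set set \<Rightarrow> bool" where
  "du_left_ideal \<alpha> \<beta> L \<longleftrightarrow> L \<subseteq> du_carrier \<alpha> \<beta> \<and> du_zero \<alpha> \<beta> \<in> L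
     \<and> (\<forall>P\<in>L. \<forall>Q\<in>L. du_add \<alpha> \<beta> P Q \<in> L)
     \<and> (\<forall>R\<in>du_carrier \<alpha> \<beta>. \<forall>P\<in>L. du_mult \<alpha> \<beta> R P \<in> L)"

definition du_right_ideal :: "'k::comm_ring_1 \<Rightarrow> 'k \<Rightarrow> 'k ncpoly set set \<Rightarrow> bool" where
  "du_right_ideal \<alpha> \<beta> L \<longleftrightarrow> L \<subseteq> du_carrier \<alpha> \<beta> \<and> du_zero \<alpha> \<beta> \<in> L
     \<and> (\<forall>P\<in>L. \<forall>Q\<in>L. du_add \<alpha> \<beta> P Q \<in> L)
     \<and> (\<forall>R\<in>du_carrier \<alpha> \<beta>. \<forall>P\<in>L. du_mult \<alpha> \<beta> P R \<in> L)"

definition du_noetherian :: "'k::comm_ring_1 \<Rightarrow> 'k \<Rightarrow> bool" where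
  "du_noetherian \<alpha> \<beta> \<longleftrightarrow>
     (\<forall>L :: nat \<Rightarrow> 'k ncpoly set set. (\<forall>n. du_left_ideal \<alpha> \<beta> (L n)) \<and> mono L
        \<longrightarrow> (\<exists>N. \<forall>n\<ge>N. L n = L N))
   \<and> (\<forall>L :: nat \<Rightarrow> 'k ncpoly set set. (\<forall>n. du_right_ideal \<alpha> \<beta> (L n)) \<and> mono L
        \<longrightarrow> (\<exists>N. \<forall>n\<ge>N. L n = L N))"

definition du_PI :: "'k::comm_ring_1 \<Rightarrow> 'k \<Rightarrow> bool" where
  "du_PI \<alpha> \<beta> \<longleftrightarrow> (\<exists>f :: 'k ncpoly. f \<noteq> 0 \<and>
      (\<forall>s. (\<forall>i. s i \<in> du_words) \<longrightarrow> nc_subst s f \<in> du_ideal \<alpha> \<beta>))"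

end

theory Submission
  imports Defs "HOL-Computational_Algebra.Polynomial"
begin

definition rhom :: "('a::comm_ring_1 \<Rightarrow> 'b::comm_ring_1) \<Rightarrow> bool" where
  "rhom h \<longleftrightarrow> (\<forall>a b. h (a+b) = h a + h b) \<and> (\<forall>a b. h (a*b) = h a * h b) \<and> h 1 = 1"

lemma rhom_add: "rhom h \<Longrightarrow> h (a+b) = h a + h b" by (simp add: rhom_def)
lemma rhom_mult: "rhom h \<Longrightarrow> h (a*b) = h a * h b" by (simp add: rhom_def)
lemma rhom_one: "rhom h \<Longrightarrow> h 1 = 1" by (simp add: rhom_def)
lemma rhom_zero: "rhom h \<Longrightarrow> h 0 = 0"
proof -
  assume h: "rhom h"
  have "h (0+0) = h 0 + h 0" by (rule rhom_add[OF h])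
  then show ?thesis by simp
qed
lemma rhom_uminus: "rhom h \<Longrightarrow> h (- a) = - h a"
proof -
  assume h: "rhom h"
  have "h (a + - a) = h a + h (-a)" by (rule rhom_add[OF h])
  then have "h a + h (-a) = 0" using rhom_zero[OF h] by simp
  then show ?thesis using minus_unique[of "h a" "h (-a)"] by simp
qed
lemma rhom_diff: "rhom h \<Longrightarrow> h (a - b) = h a - h b"
  using rhom_add[of h a "-b"] rhom_uminus[of h b] by simp
lemma rhom_power: "rhom h \<Longrightarrow> h (a ^ n) = h a ^ n"
  by (induction n) (simp_all add: rhom_one rhom_mult)
lemma rhom_sum: "rhom h \<Longrightarrow> h (sum f S) = sum (\<lambda>x. h (f x)) S"
  by (induction S rule: infinite_finite_induct) (simp_all add: rhom_zero rhom_add)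
lemma rhom_prod: "rhom h \<Longrightarrow> h (prod f S) = prod (\<lambda>x. h (f x)) S"
  by (induction S rule: infinite_finite_induct) (simp_all add: rhom_one rhom_mult)
lemma rhom_comp: "rhom h \<Longrightarrow> rhom g \<Longrightarrow> rhom (h \<circ> g)"
  by (simp add: rhom_def)
lemma rhom_id: "rhom id" by (simp add: rhom_def)

lemma rhom_map_poly: "rhom h \<Longrightarrow> rhom (map_poly h)"
proof -
  assume h: "rhom h"
  have h0: "h 0 = 0" by (rule rhom_zero[OF h])
  show ?thesis unfolding rhom_def
  proof (intro conjI allI)
    fix a b :: "'a poly"
    show "map_poly h (a + b) = map_poly h a + map_poly h b"
      by (rule poly_eqI) (simp add: coeff_map_poly h0 rhom_add[OF h])
    show "map_poly h (a * b) = map_poly h a * map_poly h b"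
      by (rule poly_eqI) (simp add: coeff_map_poly h0 coeff_mult rhom_sum[OF h] rhom_mult[OF h])
    show "map_poly h 1 = 1" by (simp add: rhom_one[OF h])
  qed
qed

lemma rhom_poly: "rhom (\<lambda>p. poly p x)"
  by (simp add: rhom_def)

definition eval1 :: "('k::comm_ring_1 \<Rightarrow> 'a::comm_ring_1) \<Rightarrow> 'a \<Rightarrow> 'k poly \<Rightarrow> 'a" where
  "eval1 C A c = poly (map_poly C c) A"

definition eval2 :: "('k::comm_ring_1 \<Rightarrow> 'a::comm_ring_1) \<Rightarrow> 'a \<Rightarrow> 'a \<Rightarrow> 'k poly poly \<Rightarrow> 'a" where
  "eval2 C A B f = poly (map_poly (eval1 C A) f) B"

lemma rhom_eval1: "rhom C \<Longrightarrow> rhom (eval1 C A)"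
proof -
  assume "rhom C"
  then have "rhom ((\<lambda>p. poly p A) \<circ> map_poly C)" by (intro rhom_comp rhom_poly rhom_map_poly)
  moreover have "eval1 C A = (\<lambda>x. poly (map_poly C x) A)" by (rule ext) (simp add: eval1_def)
  ultimately show ?thesis by (simp add: comp_def)
qed

lemma rhom_eval2: "rhom C \<Longrightarrow> rhom (eval2 C A B)"
proof -
  assume "rhom C"
  then have "rhom ((\<lambda>p. poly p B) \<circ> map_poly (eval1 C A))"
    by (intro rhom_comp rhom_poly rhom_map_poly rhom_eval1)
  moreover have "eval2 C A B = (\<lambda>x. poly (map_poly (eval1 C A) x) B)" by (rule ext) (simp add: eval2_def)
  ultimately show ?thesis by (simp add: comp_def)
qed

lemma eval1_pCons: "rhom C \<Longrightarrow> eval1 C A (pCons a c) = C a + A * eval1 C A c"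
  by (simp add: eval1_def map_poly_pCons rhom_zero)

lemma eval2_pCons: "rhom C \<Longrightarrow> eval2 C A B (pCons c f) = eval1 C A c + B * eval2 C A B f"
  by (simp add: eval2_def map_poly_pCons rhom_zero rhom_eval1)

lemma eval1_hom: "rhom C \<Longrightarrow> rhom h \<Longrightarrow> h (eval1 C A c) = eval1 (h \<circ> C) (h A) c"
proof (induction c)
  case 0 then show ?case by (simp add: eval1_def rhom_zero)
next
  case (pCons a c)
  have hc: "rhom (\<lambda>a. h (C a))" using rhom_comp[OF pCons.prems(2,1)] by (simp add: comp_def)
  then show ?case using pCons
    by (simp add: eval1_pCons[OF hc] eval1_pCons rhom_add rhom_mult comp_def)
qed

lemma eval2_hom: "rhom C \<Longrightarrow> rhom h \<Longrightarrow> h (eval2 C A B f) = eval2 (h \<circ> C) (h A) (h B) f"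
proof (induction f)
  case 0 then show ?case by (simp add: eval2_def rhom_zero)
next
  case (pCons c f)
  have hc: "rhom (\<lambda>a. h (C a))" using rhom_comp[OF pCons.prems(2,1)] by (simp add: comp_def)
  then show ?case using pCons
    by (simp add: eval2_pCons[OF hc] eval2_pCons rhom_add rhom_mult eval1_hom comp_def)
qed

definition C0 :: "'k::comm_ring_1 \<Rightarrow> 'k poly poly" where "C0 c = [:[:c:]:]"
definition uu :: "'k::comm_ring_1 poly poly" where "uu = [:[:0,1:]:]"
definition vv :: "'k::comm_ring_1 poly poly" where "vv = [:0,1:]"

lemma rhom_C0: "rhom C0"
  by (simp add: rhom_def C0_def flip: pCons_one)

lemma eval2_id: "eval2 C0 uu vv f = f"
proof -
  have e1: "eval1 C0 uu c = [:c:]" for c :: "'a::comm_ring_1 poly"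
  proof (induction c)
    case 0 then show ?case by (simp add: eval1_def)
  next
    case (pCons a c)
    then show ?case
    proof -
      have "[:[:0,1:]:] * [:c:] = [:[:0,1:] * c:]" by simp
      also have "[:0,1:] * c = pCons 0 c" by simp
      finally have "[:[:a:]:] + [:[:0,1:]:] * [:c:] = [:pCons a c:]" by simp
      then have eq: "C0 a + uu * [:c:] = [:pCons a c:]" by (simp add: C0_def uu_def)
      moreover have "eval1 C0 uu (pCons a c) = C0 a + uu * [:c:]"
        using eval1_pCons[OF rhom_C0, of uu a c] pCons.IH by simp
      ultimately show ?thesis by simp
    qed
  qed
  show ?thesis
  proof (induction f)
    case 0 then show ?case by (simp add: eval2_def)
  next
    case (pCons c f)
    then show ?case by (simp add: eval2_pCons rhom_C0 e1 vv_def)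
  qed
qed


lemma eval2_C0: "rhom C \<Longrightarrow> eval2 C A B (C0 c) = C c"
  by (simp add: C0_def eval2_def eval1_def map_poly_pCons rhom_zero rhom_eval1)
lemma eval2_uu: "rhom C \<Longrightarrow> eval2 C A B uu = A"
  by (simp add: uu_def eval2_def eval1_def map_poly_pCons rhom_zero rhom_one rhom_eval1)
lemma eval2_vv: "rhom C \<Longrightarrow> eval2 C A B vv = B"
proof -
  assume C: "rhom C"
  have "eval1 C A 1 = 1" by (rule rhom_one[OF rhom_eval1[OF C]])
  moreover have "eval1 C A 0 = 0" by (rule rhom_zero[OF rhom_eval1[OF C]])
  ultimately show ?thesis
    by (simp add: vv_def eval2_def map_poly_pCons)
qed

lemma C0_mult: "C0 a * C0 b = C0 (a * b)" by (simp add: rhom_mult[OF rhom_C0])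
lemma C0_add: "C0 a + C0 b = C0 (a + b)" by (simp add: rhom_add[OF rhom_C0])
lemma C0_1: "C0 1 = 1" by (simp add: rhom_one[OF rhom_C0])
lemma C0_0: "C0 0 = 0" by (simp add: C0_def)
lemma C0_uminus: "C0 (- a) = - C0 a" by (simp add: rhom_uminus[OF rhom_C0])
lemma C0_eq_iff: "C0 a = C0 b \<longleftrightarrow> a = b" by (simp add: C0_def)

locale du =
  fixes \<alpha> \<beta> :: "'k::field_char_0"
  assumes beta: "\<beta> \<noteq> 0"
begin

definition lin :: "'k \<Rightarrow> 'k \<Rightarrow> 'k poly poly" where
  "lin p q = C0 p * uu + C0 q * vv"

definition sig :: "'k poly poly \<Rightarrow> 'k poly poly" where
  "sig = eval2 C0 (lin \<alpha> \<beta>) uu"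
definition sinv :: "'k poly poly \<Rightarrow> 'k poly poly" where
  "sinv = eval2 C0 vv (lin (1/\<beta>) (-\<alpha>/\<beta>))"

lemma rhom_sig: "rhom sig" unfolding sig_def by (rule rhom_eval2[OF rhom_C0])
lemma rhom_sinv: "rhom sinv" unfolding sinv_def by (rule rhom_eval2[OF rhom_C0])

lemma sig_C0[simp]: "sig (C0 c) = C0 c" unfolding sig_def by (rule eval2_C0[OF rhom_C0])
lemma sinv_C0[simp]: "sinv (C0 c) = C0 c" unfolding sinv_def by (rule eval2_C0[OF rhom_C0])
lemma sig_uu: "sig uu = lin \<alpha> \<beta>" unfolding sig_def by (rule eval2_uu[OF rhom_C0])
lemma sig_vv[simp]: "sig vv = uu" unfolding sig_def by (rule eval2_vv[OF rhom_C0])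
lemma sinv_uu[simp]: "sinv uu = vv" unfolding sinv_def by (rule eval2_uu[OF rhom_C0])
lemma sinv_vv: "sinv vv = lin (1/\<beta>) (-\<alpha>/\<beta>)" unfolding sinv_def by (rule eval2_vv[OF rhom_C0])

lemma sig_add[simp]: "sig (a + b) = sig a + sig b" by (rule rhom_add[OF rhom_sig])
lemma sig_mult[simp]: "sig (a * b) = sig a * sig b" by (rule rhom_mult[OF rhom_sig])
lemma sig_1[simp]: "sig 1 = 1" by (rule rhom_one[OF rhom_sig])
lemma sig_0[simp]: "sig 0 = 0" by (rule rhom_zero[OF rhom_sig])
lemma sig_uminus[simp]: "sig (- a) = - sig a" by (rule rhom_uminus[OF rhom_sig])
lemma sig_diff[simp]: "sig (a - b) = sig a - sig b" by (rule rhom_diff[OF rhom_sig])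
lemma sig_sum[simp]: "sig (sum f S) = (\<Sum>x\<in>S. sig (f x))" by (rule rhom_sum[OF rhom_sig])
lemma sig_power[simp]: "sig (a ^ n) = sig a ^ n" by (rule rhom_power[OF rhom_sig])
lemma sinv_add[simp]: "sinv (a + b) = sinv a + sinv b" by (rule rhom_add[OF rhom_sinv])
lemma sinv_mult[simp]: "sinv (a * b) = sinv a * sinv b" by (rule rhom_mult[OF rhom_sinv])
lemma sinv_1[simp]: "sinv 1 = 1" by (rule rhom_one[OF rhom_sinv])
lemma sinv_0[simp]: "sinv 0 = 0" by (rule rhom_zero[OF rhom_sinv])
lemma sinv_uminus[simp]: "sinv (- a) = - sinv a" by (rule rhom_uminus[OF rhom_sinv])
lemma sinv_diff[simp]: "sinv (a - b) = sinv a - sinv b" by (rule rhom_diff[OF rhom_sinv])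
lemma sinv_sum[simp]: "sinv (sum f S) = (\<Sum>x\<in>S. sinv (f x))" by (rule rhom_sum[OF rhom_sinv])
lemma sinv_power[simp]: "sinv (a ^ n) = sinv a ^ n" by (rule rhom_power[OF rhom_sinv])

lemma sig_sinv[simp]: "sig (sinv f) = f"
proof -
  have "sig (sinv f) = eval2 (sig \<circ> C0) (sig vv) (sig (lin (1/\<beta>) (-\<alpha>/\<beta>))) f"
    unfolding sinv_def by (rule eval2_hom[OF rhom_C0 rhom_sig])
  moreover have "sig \<circ> C0 = C0" by (rule ext) simp
  moreover have "sig (lin (1/\<beta>) (-\<alpha>/\<beta>)) = vv"
  proof -
    have "sig (lin (1/\<beta>) (-\<alpha>/\<beta>)) = C0 (1/\<beta>) * (C0 \<alpha> * uu + C0 \<beta> * vv) + C0 (-\<alpha>/\<beta>) * uu"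
      by (simp add: lin_def sig_uu)
    also have "\<dots> = (C0 (1/\<beta>) * C0 \<alpha> + C0 (-\<alpha>/\<beta>)) * uu + (C0 (1/\<beta>) * C0 \<beta>) * vv"
      by (simp add: algebra_simps)
    also have "\<dots> = vv" using beta by (simp add: C0_mult C0_add C0_1 C0_0)
    finally show ?thesis .
  qed
  ultimately show ?thesis by (simp add: eval2_id)
qed

lemma sinv_sig[simp]: "sinv (sig f) = f"
proof -
  have "sinv (sig f) = eval2 (sinv \<circ> C0) (sinv (lin \<alpha> \<beta>)) (sinv uu) f"
    unfolding sig_def by (rule eval2_hom[OF rhom_C0 rhom_sinv])
  moreover have "sinv \<circ> C0 = C0" by (rule ext) simp
  moreover have "sinv (lin \<alpha> \<beta>) = uu"
  proof -
    have "sinv (lin \<alpha> \<beta>) = C0 \<alpha> * vv + C0 \<beta> * (C0 (1/\<beta>) * uu + C0 (-\<alpha>/\<beta>) * vv)"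
      by (simp add: lin_def sinv_vv)
    also have "\<dots> = (C0 \<alpha> + C0 \<beta> * C0 (-\<alpha>/\<beta>)) * vv + (C0 \<beta> * C0 (1/\<beta>)) * uu"
      by (simp add: algebra_simps)
    also have "\<dots> = uu" using beta by (simp add: C0_mult C0_add C0_1 C0_0)
    finally show ?thesis .
  qed
  ultimately show ?thesis by (simp add: eval2_id)
qed

lemma sig_inj: "sig a = sig b \<Longrightarrow> a = b" by (metis sinv_sig)
lemma sinv_inj: "sinv a = sinv b \<Longrightarrow> a = b" by (metis sig_sinv)

end

lemma nc_mult_superset:
  assumes "finite U" "finite W" "Poly_Mapping.keys p \<subseteq> U" "Poly_Mapping.keys q \<subseteq> W"
  shows "nc_mult p q = (\<Sum>u\<in>U. \<Sum>v\<in>W. Poly_Mapping.single (u @ v) (Poly_Mapping.lookup p u * Poly_Mapping.lookup q v))"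
proof -
  have "nc_mult p q = (\<Sum>u\<in>U. \<Sum>v\<in>Poly_Mapping.keys q. Poly_Mapping.single (u @ v) (Poly_Mapping.lookup p u * Poly_Mapping.lookup q v))"
    unfolding nc_mult_def
    by (rule sum.mono_neutral_left) (use assms in \<open>auto simp: in_keys_iff\<close>)
  also have "\<dots> = (\<Sum>u\<in>U. \<Sum>v\<in>W. Poly_Mapping.single (u @ v) (Poly_Mapping.lookup p u * Poly_Mapping.lookup q v))"
    by (rule sum.cong[OF refl], rule sum.mono_neutral_left) (use assms in \<open>auto simp: in_keys_iff\<close>)
  finally show ?thesis .
qed

lemma nc_mult_single_single:
  "nc_mult (Poly_Mapping.single u a) (Poly_Mapping.single v b) = Poly_Mapping.single (u @ v) (a * b)"
  by (subst nc_mult_superset[of "{u}" "{v}"]) auto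

lemma nc_mult_add_left: "nc_mult (p + p') q = nc_mult p q + nc_mult p' q"
proof -
  let ?U = "Poly_Mapping.keys p \<union> Poly_Mapping.keys p'"
  let ?W = "Poly_Mapping.keys q"
  have k: "Poly_Mapping.keys (p + p') \<subseteq> ?U" by (rule keys_add)
  have e1: "nc_mult (p + p') q = (\<Sum>u\<in>?U. \<Sum>v\<in>?W. Poly_Mapping.single (u @ v) (Poly_Mapping.lookup (p + p') u * Poly_Mapping.lookup q v))"
    by (rule nc_mult_superset) (use k in auto)
  have e2: "nc_mult p q = (\<Sum>u\<in>?U. \<Sum>v\<in>?W. Poly_Mapping.single (u @ v) (Poly_Mapping.lookup p u * Poly_Mapping.lookup q v))"
    by (rule nc_mult_superset) auto
  have e3: "nc_mult p' q = (\<Sum>u\<in>?U. \<Sum>v\<in>?W. Poly_Mapping.single (u @ v) (Poly_Mapping.lookup p' u * Poly_Mapping.lookup q v))"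
    by (rule nc_mult_superset) auto
  show ?thesis unfolding e1 e2 e3
    by (simp add: lookup_add distrib_right single_add sum.distrib)
qed

lemma nc_mult_add_right: "nc_mult p (q + q') = nc_mult p q + nc_mult p q'"
proof -
  let ?U = "Poly_Mapping.keys p"
  let ?W = "Poly_Mapping.keys q \<union> Poly_Mapping.keys q'"
  have k: "Poly_Mapping.keys (q + q') \<subseteq> ?W" by (rule keys_add)
  have e1: "nc_mult p (q + q') = (\<Sum>u\<in>?U. \<Sum>v\<in>?W. Poly_Mapping.single (u @ v) (Poly_Mapping.lookup p u * Poly_Mapping.lookup (q + q') v))"
    by (rule nc_mult_superset) (use k in auto)
  have e2: "nc_mult p q = (\<Sum>u\<in>?U. \<Sum>v\<in>?W. Poly_Mapping.single (u @ v) (Poly_Mapping.lookup p u * Poly_Mapping.lookup q v))"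
    by (rule nc_mult_superset) auto
  have e3: "nc_mult p q' = (\<Sum>u\<in>?U. \<Sum>v\<in>?W. Poly_Mapping.single (u @ v) (Poly_Mapping.lookup p u * Poly_Mapping.lookup q' v))"
    by (rule nc_mult_superset) auto
  show ?thesis unfolding e1 e2 e3
    by (simp add: lookup_add distrib_left single_add sum.distrib)
qed

lemma nc_mult_zero_left[simp]: "nc_mult 0 q = 0" by (simp add: nc_mult_def)
lemma nc_mult_zero_right[simp]: "nc_mult p 0 = 0" by (simp add: nc_mult_def)

lemma nc_mult_uminus_left: "nc_mult (- p) q = - nc_mult p q"
  using nc_mult_add_left[of p "-p" q] minus_unique[of "nc_mult p q" "nc_mult (- p) q"] by simp

lemma nc_mult_diff_left: "nc_mult (p - p') q = nc_mult p q - nc_mult p' q"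
  using nc_mult_add_left[of p "-p'" q] nc_mult_uminus_left[of p' q] by simp

lemma nc_mult_diff_right: "nc_mult p (q - q') = nc_mult p q - nc_mult p q'"
proof -
  have "nc_mult p (q - q') + nc_mult p q' = nc_mult p q" using nc_mult_add_right[of p "q - q'" q'] by simp
  then show ?thesis by (simp add: eq_diff_eq)
qed

lemma pm_expand: "p = (\<Sum>w\<in>Poly_Mapping.keys p. Poly_Mapping.single w (Poly_Mapping.lookup p w))"
proof (rule poly_mapping_eqI)
  fix k
  show "Poly_Mapping.lookup p k = Poly_Mapping.lookup (\<Sum>w\<in>Poly_Mapping.keys p. Poly_Mapping.single w (Poly_Mapping.lookup p w)) k"
    by (simp add: lookup_sum lookup_single when_def in_keys_iff)
qed

context du
begin

definition letter :: "nat \<Rightarrow> (int \<Rightarrow> 'k poly poly) \<Rightarrow> (int \<Rightarrow> 'k poly poly)" where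
  "letter a g = (if a = 0 then (\<lambda>n. sig (g (n - 1))) else if a = 1 then (\<lambda>n. vv * sinv (g (n + 1))) else (\<lambda>n. 0))"

fun opw :: "nat list \<Rightarrow> (int \<Rightarrow> 'k poly poly) \<Rightarrow> (int \<Rightarrow> 'k poly poly)" where
  "opw [] g = g"
| "opw (a # w) g = letter a (opw w g)"

definition Op :: "'k ncpoly \<Rightarrow> (int \<Rightarrow> 'k poly poly) \<Rightarrow> (int \<Rightarrow> 'k poly poly)" where
  "Op p g = (\<lambda>n. \<Sum>w\<in>Poly_Mapping.keys p. C0 (Poly_Mapping.lookup p w) * opw w g n)"

lemma letter_add: "letter a (\<lambda>n. f n + g n) = (\<lambda>n. letter a f n + letter a g n)"
  by (auto simp: letter_def algebra_simps)
lemma letter_scal: "letter a (\<lambda>n. C0 c * f n) = (\<lambda>n. C0 c * letter a f n)"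
  by (auto simp: letter_def algebra_simps)
lemma letter_zero: "letter a (\<lambda>n. 0) = (\<lambda>n. 0)"
  by (auto simp: letter_def)

lemma opw_add: "opw w (\<lambda>n. f n + g n) = (\<lambda>n. opw w f n + opw w g n)"
  by (induction w) (simp_all add: letter_add)
lemma opw_scal: "opw w (\<lambda>n. C0 c * f n) = (\<lambda>n. C0 c * opw w f n)"
  by (induction w) (simp_all add: letter_scal)
lemma opw_zero: "opw w (\<lambda>n. 0) = (\<lambda>n. 0)"
  by (induction w) (simp_all add: letter_zero)
lemma opw_sum: "opw w (\<lambda>n. \<Sum>i\<in>S. f i n) = (\<lambda>n. \<Sum>i\<in>S. opw w (f i) n)"
proof (induction S rule: infinite_finite_induct)
  case (infinite S) then show ?case by (simp add: opw_zero)
next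
  case empty then show ?case by (simp add: opw_zero)
next
  case (insert x F)
  then show ?case by (simp add: opw_add)
qed
lemma opw_append: "opw (u @ w) g = opw u (opw w g)"
  by (induction u) simp_all

lemma Op_superset:
  assumes "finite S" "Poly_Mapping.keys p \<subseteq> S"
  shows "Op p g n = (\<Sum>w\<in>S. C0 (Poly_Mapping.lookup p w) * opw w g n)"
  unfolding Op_def
  by (rule sum.mono_neutral_left) (use assms in \<open>auto simp: in_keys_iff C0_0\<close>)

lemma Op_add: "Op (p + q) g n = Op p g n + Op q g n"
proof -
  let ?S = "Poly_Mapping.keys p \<union> Poly_Mapping.keys q"
  have k: "Poly_Mapping.keys (p + q) \<subseteq> ?S" by (rule keys_add)
  show ?thesis
    by (simp add: Op_superset[OF _ k] Op_superset[of ?S p] Op_superset[of ?S q] lookup_add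
        flip: C0_add) (simp add: distrib_right sum.distrib)
qed

lemma Op_zero[simp]: "Op 0 g n = 0" by (simp add: Op_def)

lemma Op_uminus: "Op (- p) g n = - Op p g n"
  by (simp add: Op_def C0_uminus sum_negf)

lemma Op_diff: "Op (p - q) g n = Op p g n - Op q g n"
  using Op_add[of p "-q" g n] Op_uminus[of q g n] by simp

lemma Op_single: "Op (Poly_Mapping.single w c) g n = C0 c * opw w g n"
  by (cases "c = 0") (simp_all add: Op_def C0_0)

lemma Op_sum: "Op (\<Sum>i\<in>S. P i) g n = (\<Sum>i\<in>S. Op (P i) g n)"
  by (induction S rule: infinite_finite_induct) (simp_all add: Op_add)

lemma Op_lin_add: "Op p (\<lambda>n. f n + h n) = (\<lambda>n. Op p f n + Op p h n)"
  by (simp add: Op_def opw_add distrib_left sum.distrib)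
lemma Op_lin_scal: "Op p (\<lambda>n. C0 c * f n) = (\<lambda>n. C0 c * Op p f n)"
  by (simp add: Op_def opw_scal sum_distrib_left algebra_simps)
lemma Op_lin_zero: "Op p (\<lambda>n. 0) = (\<lambda>n. 0)"
  by (simp add: Op_def opw_zero)
lemma Op_lin_sum: "Op p (\<lambda>n. \<Sum>i\<in>S. f i n) = (\<lambda>n. \<Sum>i\<in>S. Op p (f i) n)"
  by (simp add: Op_def opw_sum sum_distrib_left sum.swap[of _ S])

lemma Op_mult: "Op (nc_mult p q) g = Op p (Op q g)"
proof
  fix n
  have "Op (nc_mult p q) g n = (\<Sum>u\<in>Poly_Mapping.keys p. \<Sum>v\<in>Poly_Mapping.keys q.
      C0 (Poly_Mapping.lookup p u * Poly_Mapping.lookup q v) * opw (u @ v) g n)"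
    by (simp add: nc_mult_def Op_sum Op_single)
  also have "\<dots> = (\<Sum>u\<in>Poly_Mapping.keys p. C0 (Poly_Mapping.lookup p u) *
      (\<Sum>v\<in>Poly_Mapping.keys q. C0 (Poly_Mapping.lookup q v) * opw u (opw v g) n))"
    by (simp add: opw_append sum_distrib_left C0_mult[symmetric] mult.assoc)
  also have "\<dots> = Op p (Op q g) n"
  proof -
    have "Op q g = (\<lambda>n. \<Sum>v\<in>Poly_Mapping.keys q. C0 (Poly_Mapping.lookup q v) * opw v g n)"
      by (simp add: Op_def)
    then have "\<And>u. opw u (Op q g) = (\<lambda>n. \<Sum>v\<in>Poly_Mapping.keys q. C0 (Poly_Mapping.lookup q v) * opw u (opw v g) n)"
      by (simp add: opw_sum opw_scal)
    then show ?thesis by (simp add: Op_def)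
  qed
  finally show "Op (nc_mult p q) g n = Op p (Op q g) n" .
qed

lemma Op_one: "Op nc_one g = g"
  by (rule ext) (simp add: nc_one_def Op_single C0_1)

lemma Op_smul: "Op (nc_smul c p) g n = C0 c * Op p g n"
  by (simp add: nc_smul_def Op_mult Op_single)

lemma Op_var0: "Op (nc_var 0) g = letter 0 g"
  by (rule ext) (simp add: nc_var_def Op_single C0_1)
lemma Op_var1: "Op (nc_var 1) g = letter 1 g"
  by (rule ext) (simp add: nc_var_def Op_single C0_1)

lemma Op_rel1: "Op (du_rel1 \<alpha> \<beta>) g n = 0"
proof -
  have "Op (du_rel1 \<alpha> \<beta>) g n = opw [0,0,1] g n - C0 \<alpha> * opw [0,1,0] g n - C0 \<beta> * opw [1,0,0] g n"
    by (simp add: du_rel1_def Op_diff Op_single C0_1)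
  also have "\<dots> = (sig uu - C0 \<alpha> * uu - C0 \<beta> * vv) * sig (g (n - 1))"
    by (simp add: letter_def algebra_simps)
  also have "\<dots> = 0" by (simp add: sig_uu lin_def)
  finally show ?thesis .
qed

lemma Op_rel2: "Op (du_rel2 \<alpha> \<beta>) g n = 0"
proof -
  have "Op (du_rel2 \<alpha> \<beta>) g n = opw [0,1,1] g n - C0 \<alpha> * opw [1,0,1] g n - C0 \<beta> * opw [1,1,0] g n"
    by (simp add: du_rel2_def Op_diff Op_single C0_1)
  also have "\<dots> = vv * (uu - C0 \<alpha> * vv - C0 \<beta> * sinv vv) * sinv (g (n + 1))"
    by (simp add: letter_def algebra_simps)
  also have "C0 \<beta> * sinv vv = uu - C0 \<alpha> * vv"
  proof -
    have "C0 \<beta> * sinv vv = (C0 \<beta> * C0 (1/\<beta>)) * uu + (C0 \<beta> * C0 (-\<alpha>/\<beta>)) * vv"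
      by (simp add: sinv_vv lin_def algebra_simps)
    also have "\<dots> = uu - C0 \<alpha> * vv" using beta by (simp add: C0_mult C0_1 C0_uminus)
    finally show ?thesis .
  qed
  finally show ?thesis by simp
qed

lemma Op_ideal: "p \<in> du_ideal \<alpha> \<beta> \<Longrightarrow> Op p g = (\<lambda>n. 0)"
proof (induction arbitrary: g rule: du_ideal.induct)
  case zero then show ?case by (simp add: fun_eq_iff)
next
  case (add p q) then show ?case by (simp add: fun_eq_iff Op_add)
next
  case (gen r a b)
  have "Op r h = (\<lambda>n. 0)" for h using gen Op_rel1 Op_rel2 by auto
  then show ?case by (simp add: Op_mult Op_lin_zero)
qed

end

lemma const_pow: "[:a:] ^ n = [:a ^ n:]"
proof (induction n)
  case 0 show ?case by simp
next
  case (Suc n)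
  have "[:a:] ^ Suc n = [:a:] * [:a ^ n:]" using Suc by simp
  also have "\<dots> = [:a ^ Suc n:]" by (simp add: power_commutes)
  finally show ?case .
qed

lemma words_add: "p \<in> du_words \<Longrightarrow> q \<in> du_words \<Longrightarrow> p + q \<in> du_words"
  unfolding du_words_def using keys_add[of p q] by blast
lemma words_uminus: "p \<in> du_words \<Longrightarrow> - p \<in> du_words"
  unfolding du_words_def by simp
lemma words_diff: "p \<in> du_words \<Longrightarrow> q \<in> du_words \<Longrightarrow> p - q \<in> du_words"
  unfolding du_words_def using keys_diff[of p q] by blast
lemma words_zero: "0 \<in> du_words" by (simp add: du_words_def)
lemma words_single: "set w \<subseteq> {0,1} \<Longrightarrow> Poly_Mapping.single w c \<in> du_words"
  by (simp add: du_words_def)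
lemma words_sum: "(\<And>i. i \<in> S \<Longrightarrow> P i \<in> du_words) \<Longrightarrow> sum P S \<in> du_words"
  by (induction S rule: infinite_finite_induct) (simp_all add: words_zero words_add)
lemma words_mult: "p \<in> du_words \<Longrightarrow> q \<in> du_words \<Longrightarrow> nc_mult p q \<in> du_words"
  unfolding nc_mult_def
  by (intro words_sum) (auto simp: du_words_def intro!: words_single)
lemma words_nc_one: "nc_one \<in> du_words" by (simp add: nc_one_def du_words_def)
lemma words_smul: "p \<in> du_words \<Longrightarrow> nc_smul c p \<in> du_words"
  unfolding nc_smul_def by (intro words_mult words_single) auto
lemma words_var0: "nc_var 0 \<in> du_words" by (simp add: nc_var_def du_words_def)
lemma words_var1: "nc_var 1 \<in> du_words" by (simp add: nc_var_def du_words_def)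

lemma I_add: "p \<in> du_ideal a b \<Longrightarrow> q \<in> du_ideal a b \<Longrightarrow> p + q \<in> du_ideal a b"
  by (rule du_ideal.add)
lemma I_uminus: "p \<in> du_ideal a b \<Longrightarrow> - p \<in> du_ideal a b"
proof (induction rule: du_ideal.induct)
  case zero then show ?case by (simp add: du_ideal.zero)
next
  case (add p q) then show ?case using du_ideal.add[of "-p" a b "-q"] by (simp add: add.commute)
next
  case (gen r x y)
  then show ?case using du_ideal.gen[of r a b "- x" y] by (simp add: nc_mult_uminus_left)
qed
lemma I_diff: "p \<in> du_ideal a b \<Longrightarrow> q \<in> du_ideal a b \<Longrightarrow> p - q \<in> du_ideal a b"
  using I_add[of p a b "-q"] I_uminus[of q a b] by simp

context du
begin

abbreviation I where "I \<equiv> du_ideal \<alpha> \<beta>"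

lemma rel1_inst: "Poly_Mapping.single (p @ [0,0,1] @ q) c - Poly_Mapping.single (p @ [0,1,0] @ q) (c * \<alpha>)
   - Poly_Mapping.single (p @ [1,0,0] @ q) (c * \<beta>) \<in> I"
proof -
  have m: "nc_mult (nc_mult (Poly_Mapping.single p c) (du_rel1 \<alpha> \<beta>)) (Poly_Mapping.single q 1) \<in> I"
    by (rule du_ideal.gen) simp
  have e: "nc_mult (nc_mult (Poly_Mapping.single p c) (du_rel1 \<alpha> \<beta>)) (Poly_Mapping.single q 1) =
     Poly_Mapping.single (p @ [0,0,1] @ q) c - Poly_Mapping.single (p @ [0,1,0] @ q) (c * \<alpha>)
   - Poly_Mapping.single (p @ [1,0,0] @ q) (c * \<beta>)"
    by (simp only: du_rel1_def nc_mult_diff_right nc_mult_diff_left nc_mult_single_single append_assoc mult_1_right)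
  show ?thesis using m unfolding e .
qed

lemma rel2_inst: "Poly_Mapping.single (p @ [0,1,1] @ q) c - Poly_Mapping.single (p @ [1,0,1] @ q) (c * \<alpha>)
   - Poly_Mapping.single (p @ [1,1,0] @ q) (c * \<beta>) \<in> I"
proof -
  have m: "nc_mult (nc_mult (Poly_Mapping.single p c) (du_rel2 \<alpha> \<beta>)) (Poly_Mapping.single q 1) \<in> I"
    by (rule du_ideal.gen) simp
  have e: "nc_mult (nc_mult (Poly_Mapping.single p c) (du_rel2 \<alpha> \<beta>)) (Poly_Mapping.single q 1) =
     Poly_Mapping.single (p @ [0,1,1] @ q) c - Poly_Mapping.single (p @ [1,0,1] @ q) (c * \<alpha>)
   - Poly_Mapping.single (p @ [1,1,0] @ q) (c * \<beta>)"
    by (simp only: du_rel2_def nc_mult_diff_right nc_mult_diff_left nc_mult_single_single append_assoc mult_1_right)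
  show ?thesis using m unfolding e .
qed

definition nw :: "nat \<Rightarrow> nat \<Rightarrow> nat \<Rightarrow> nat list" where
  "nw i j k = replicate i 1 @ concat (replicate j [0,1]) @ replicate k 0"

definition NF :: "nat list set" where "NF = {w. \<exists>i j k. w = nw i j k}"

lemma nf_or_infix:
  "set w \<subseteq> {0,1} \<Longrightarrow> w \<in> NF \<or> (\<exists>p q. w = p @ [0,0,1] @ q \<or> w = p @ [0,1,1] @ q)"
proof (induction w)
  case Nil
  have "[] = nw 0 0 0" by (simp add: nw_def)
  then show ?case by (auto simp: NF_def)
next
  case (Cons a w)
  then have a: "a = 0 \<or> a = 1" and IH: "w \<in> NF \<or> (\<exists>p q. w = p @ [0,0,1] @ q \<or> w = p @ [0,1,1] @ q)" by auto
  show ?case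
  proof (cases "w \<in> NF")
    case False
    with IH obtain p q where "w = p @ [0,0,1] @ q \<or> w = p @ [0,1,1] @ q" by blast
    then have "a # w = (a # p) @ [0,0,1] @ q \<or> a # w = (a # p) @ [0,1,1] @ q" by auto
    then show ?thesis by blast
  next
    case True
    then obtain i j k where w: "w = nw i j k" by (auto simp: NF_def)
    show ?thesis
    proof (cases "a = 1")
      case True
      then have "a # w = nw (Suc i) j k" by (simp add: w nw_def)
      then show ?thesis by (auto simp: NF_def)
    next
      case False
      with a have a0: "a = 0" by simp
      show ?thesis
      proof (cases i)
        case 0
        show ?thesis
        proof (cases j)
          case 0
          then have "a # w = nw 0 0 (Suc k)" using \<open>i = 0\<close> by (simp add: w nw_def a0)
          then show ?thesis by (auto simp: NF_def)
        next
          case (Suc j')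
          then have "a # w = [] @ [0,0,1] @ (concat (replicate j' [0,1]) @ replicate k 0)"
            using \<open>i = 0\<close> by (simp add: w nw_def a0)
          then show ?thesis by blast
        qed
      next
        case (Suc i')
        show ?thesis
        proof (cases i')
          case 0
          then have "a # w = nw 0 (Suc j) k" using Suc by (simp add: w nw_def a0)
          then show ?thesis by (auto simp: NF_def)
        next
          case (Suc i'')
          then have "a # w = [] @ [0,1,1] @ (replicate i'' 1 @ concat (replicate j [0,1]) @ replicate k 0)"
            using \<open>i = Suc i'\<close> by (simp add: w nw_def a0)
          then show ?thesis by blast
        qed
      qed
    qed
  qed
qed

fun wval :: "nat list \<Rightarrow> nat" where
  "wval [] = 0"
| "wval (a # w) = (if a = 0 then 2 ^ length w else 0) + wval w"

lemma wval_append: "wval (p @ q) = wval p * 2 ^ length q + wval q"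
  by (induction p) (simp_all add: algebra_simps power_add)

lemma nw_words: "set (nw i j k) \<subseteq> {0,1}"
  by (auto simp: nw_def)

lemma span_single:
  "set w \<subseteq> {0,1} \<Longrightarrow> \<exists>q. Poly_Mapping.keys q \<subseteq> NF \<and> Poly_Mapping.single w c - q \<in> I"
proof (induction "wval w" arbitrary: w c rule: less_induct)
  case less
  show ?case
  proof (cases "w \<in> NF")
    case True
    then show ?thesis by (intro exI[of _ "Poly_Mapping.single w c"]) (auto simp: du_ideal.zero)
  next
    case False
    with nf_or_infix[OF less.prems] obtain p q where pq: "w = p @ [0,0,1] @ q \<or> w = p @ [0,1,1] @ q" by blast
    then obtain m1 m2 m :: "nat list" where mm: "(m = [0,0,1] \<and> m1 = [0,1,0] \<and> m2 = [1,0,0]) \<or> (m = [0,1,1] \<and> m1 = [1,0,1] \<and> m2 = [1,1,0])"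
      and w: "w = p @ m @ q"
    proof -
      { assume "w = p @ [0,0,1] @ q" then have ?thesis using that[of "[0,0,1]" "[0,1,0]" "[1,0,0]"] by simp }
      moreover
      { assume "w = p @ [0,1,1] @ q" then have ?thesis using that[of "[0,1,1]" "[1,0,1]" "[1,1,0]"] by simp }
      ultimately show ?thesis using pq by blast
    qed
    let ?w1 = "p @ m1 @ q" and ?w2 = "p @ m2 @ q"
    have rel: "Poly_Mapping.single w c - Poly_Mapping.single ?w1 (c * \<alpha>) - Poly_Mapping.single ?w2 (c * \<beta>) \<in> I"
      using mm rel1_inst rel2_inst w by auto
    have sets: "set ?w1 \<subseteq> {0,1}" "set ?w2 \<subseteq> {0,1}" using less.prems mm w by auto
    have lt: "wval ?w1 < wval w" "wval ?w2 < wval w"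
      using mm w by (auto simp: wval_append)
    obtain q1 where q1: "Poly_Mapping.keys q1 \<subseteq> NF" "Poly_Mapping.single ?w1 (c * \<alpha>) - q1 \<in> I"
      using less.hyps[OF lt(1) sets(1)] by blast
    obtain q2 where q2: "Poly_Mapping.keys q2 \<subseteq> NF" "Poly_Mapping.single ?w2 (c * \<beta>) - q2 \<in> I"
      using less.hyps[OF lt(2) sets(2)] by blast
    have "Poly_Mapping.single w c - (q1 + q2) =
       (Poly_Mapping.single w c - Poly_Mapping.single ?w1 (c * \<alpha>) - Poly_Mapping.single ?w2 (c * \<beta>))
       + (Poly_Mapping.single ?w1 (c * \<alpha>) - q1) + (Poly_Mapping.single ?w2 (c * \<beta>) - q2)"
      by (simp add: algebra_simps)
    also have "\<dots> \<in> I" by (intro I_add rel q1 q2)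
    finally show ?thesis using q1 q2 keys_add[of q1 q2] by (intro exI[of _ "q1 + q2"]) auto
  qed
qed

lemma span_words_aux:
  assumes "finite S" "\<And>w. w \<in> S \<Longrightarrow> set w \<subseteq> {0,1}"
  shows "\<exists>q. Poly_Mapping.keys q \<subseteq> NF \<and> (\<Sum>w\<in>S. Poly_Mapping.single w (f w)) - q \<in> I"
  using assms
proof (induction S rule: finite_induct)
  case empty
  have "(0::'k ncpoly) \<in> I" by (rule du_ideal.zero)
  then show ?case by (intro exI[of _ 0]) simp
next
  case (insert x F)
  have "\<exists>q. Poly_Mapping.keys q \<subseteq> NF \<and> (\<Sum>w\<in>F. Poly_Mapping.single w (f w)) - q \<in> I"
    using insert.IH insert.prems by simp
  then obtain q where q: "Poly_Mapping.keys q \<subseteq> NF" "(\<Sum>w\<in>F. Poly_Mapping.single w (f w)) - q \<in> I"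
    by blast
  have sx: "set x \<subseteq> {0,1}" using insert.prems by simp
  obtain q' where q': "Poly_Mapping.keys q' \<subseteq> NF" "Poly_Mapping.single x (f x) - q' \<in> I"
    using span_single[OF sx, of "f x"] by blast
  have "(\<Sum>w\<in>insert x F. Poly_Mapping.single w (f w)) - (q' + q) =
    (Poly_Mapping.single x (f x) - q') + ((\<Sum>w\<in>F. Poly_Mapping.single w (f w)) - q)"
    using insert.hyps by (simp add: algebra_simps)
  also have "\<dots> \<in> I" by (intro I_add q q')
  finally have "(\<Sum>w\<in>insert x F. Poly_Mapping.single w (f w)) - (q' + q) \<in> I" .
  moreover have "Poly_Mapping.keys (q' + q) \<subseteq> NF" using q q' keys_add[of q' q] by blast
  ultimately show ?case by blast
qed

lemma span_words:
  assumes "p \<in> du_words"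
  shows "\<exists>q. Poly_Mapping.keys q \<subseteq> NF \<and> p - q \<in> I"
proof -
  have "\<And>w. w \<in> Poly_Mapping.keys p \<Longrightarrow> set w \<subseteq> {0,1}" using assms by (simp add: du_words_def)
  from span_words_aux[OF finite_keys this, where f = "Poly_Mapping.lookup p"]
  obtain q where q: "Poly_Mapping.keys q \<subseteq> NF"
    "(\<Sum>w\<in>Poly_Mapping.keys p. Poly_Mapping.single w (Poly_Mapping.lookup p w)) - q \<in> I" by blast
  have "(\<Sum>w\<in>Poly_Mapping.keys p. Poly_Mapping.single w (Poly_Mapping.lookup p w)) = p" by (rule pm_expand[symmetric])
  with q show ?thesis by auto
qed

end

context du
begin

definition dl :: "int \<Rightarrow> 'k poly poly \<Rightarrow> int \<Rightarrow> 'k poly poly" where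
  "dl m r = (\<lambda>n. if n = m then r else 0)"

definition Fv :: "'k poly poly \<Rightarrow> 'k poly poly" where "Fv r = vv * sinv r"

definition Ei :: "nat \<Rightarrow> nat \<Rightarrow> 'k poly poly" where "Ei i j = (Fv ^^ i) (uu ^ j)"

lemma letter0_dl: "letter 0 (dl m r) = dl (m + 1) (sig r)"
  by (rule ext) (auto simp: letter_def dl_def)
lemma letter1_dl: "letter (Suc 0) (dl m r) = dl (m - 1) (vv * sinv r)"
  by (rule ext) (auto simp: letter_def dl_def)

lemma opw_rep0: "opw (replicate k 0) (dl m r) = dl (m + int k) ((sig ^^ k) r)"
  by (induction k) (simp_all add: letter0_dl algebra_simps)
lemma opw_01: "opw (concat (replicate j [0,Suc 0])) (dl m r) = dl m (uu ^ j * r)"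
  by (induction j) (simp_all add: opw_append letter0_dl letter1_dl algebra_simps)
lemma opw_rep1: "opw (replicate i (Suc 0)) (dl m r) = dl (m - int i) ((Fv ^^ i) r)"
  by (induction i) (simp_all add: letter1_dl algebra_simps Fv_def)

lemma sig_iter_1: "(sig ^^ k) 1 = 1"
  by (induction k) simp_all

lemma opw_nw: "opw (nw i j k) (dl 0 1) = dl (int k - int i) (Ei i j)"
  by (simp add: nw_def opw_append opw_rep0 opw_rep1 opw_01 sig_iter_1 Ei_def)

lemma vv_nz: "vv \<noteq> (0 :: 'k poly poly)" by (simp add: vv_def)

lemma coeff0_vv_mult: "coeff (vv * x) 0 = 0" by (simp add: vv_def)

lemma C0_uu_pow: "C0 d * uu ^ j = [:monom d j:]"
  by (simp add: C0_def uu_def const_pow monom_altdef)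

lemma pair_indep_aux:
  "\<forall>P d. finite P \<longrightarrow> (\<forall>t\<in>P. fst t < B) \<longrightarrow> (\<Sum>t\<in>P. C0 (d (fst t) (snd t)) * Ei (fst t) (snd t)) = 0
      \<longrightarrow> (\<forall>t\<in>P. d (fst t) (snd t) = 0)"
proof (induction B)
  case 0 then show ?case by auto
next
  case (Suc B)
  show ?case
  proof (intro allI impI)
    fix P :: "(nat \<times> nat) set" and d
    assume fin: "finite P" and bd: "\<forall>t\<in>P. fst t < Suc B"
      and sm: "(\<Sum>t\<in>P. C0 (d (fst t) (snd t)) * Ei (fst t) (snd t)) = 0"
    define P0 where "P0 = {t\<in>P. fst t = 0}"
    define P1 where "P1 = {t\<in>P. fst t \<noteq> 0}"
    have PP: "P = P0 \<union> P1" "P0 \<inter> P1 = {}" by (auto simp: P0_def P1_def)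
    have fin0: "finite P0" and fin1: "finite P1" using fin by (auto simp: P0_def P1_def)
    define A where "A = (\<Sum>t\<in>P0. C0 (d (fst t) (snd t)) * Ei (fst t) (snd t))"
    define X where "X = (\<Sum>t\<in>P1. C0 (d (fst t) (snd t)) * Ei (fst t - 1) (snd t))"
    have A_eq: "A = (\<Sum>t\<in>P0. [:monom (d (fst t) (snd t)) (snd t):])"
      unfolding A_def by (rule sum.cong) (auto simp: P0_def Ei_def C0_uu_pow)
    have "(\<Sum>t\<in>P1. C0 (d (fst t) (snd t)) * Ei (fst t) (snd t)) = vv * sinv X"
    proof -
      have "(\<Sum>t\<in>P1. C0 (d (fst t) (snd t)) * Ei (fst t) (snd t)) =
            (\<Sum>t\<in>P1. vv * (C0 (d (fst t) (snd t)) * sinv (Ei (fst t - 1) (snd t))))"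
      proof (rule sum.cong[OF refl])
        fix t assume "t \<in> P1"
        then obtain i where "fst t = Suc i" by (cases "fst t") (auto simp: P1_def)
        then show "C0 (d (fst t) (snd t)) * Ei (fst t) (snd t) = vv * (C0 (d (fst t) (snd t)) * sinv (Ei (fst t - 1) (snd t)))"
          by (simp add: Ei_def Fv_def algebra_simps)
      qed
      also have "\<dots> = vv * sinv X" by (simp add: X_def sum_distrib_left)
      finally show ?thesis .
    qed
    then have eq: "A + vv * sinv X = 0" using sm PP fin0 fin1 by (simp add: A_def sum.union_disjoint)
    have d0: "d (fst t) (snd t) = 0" if "t \<in> P0" for t
    proof -
      have "coeff (A + vv * sinv X) 0 = 0" using eq by simp
      then have "coeff A 0 = 0" by (simp add: coeff0_vv_mult)
      then have "(\<Sum>t\<in>P0. monom (d (fst t) (snd t)) (snd t)) = 0"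
        by (simp add: A_eq coeff_sum)
      then have "coeff (\<Sum>t\<in>P0. monom (d (fst t) (snd t)) (snd t)) (snd t) = 0" by simp
      then have "(\<Sum>s\<in>P0. if s = t then d (fst t) (snd t) else 0) = 0"
        unfolding coeff_sum
      proof -
        assume h: "(\<Sum>s\<in>P0. coeff (monom (d (fst s) (snd s)) (snd s)) (snd t)) = 0"
        have "(\<Sum>s\<in>P0. coeff (monom (d (fst s) (snd s)) (snd s)) (snd t)) = (\<Sum>s\<in>P0. if s = t then d (fst t) (snd t) else 0)"
        proof (rule sum.cong[OF refl])
          fix s assume "s \<in> P0"
          then show "coeff (monom (d (fst s) (snd s)) (snd s)) (snd t) = (if s = t then d (fst t) (snd t) else 0)"
            using that by (auto simp: P0_def prod_eq_iff)
        qed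
        with h show ?thesis by simp
      qed
      then show ?thesis using that fin0 by (simp add: sum.delta')
    qed
    then have "A = 0" unfolding A_def by (simp add: C0_0)
    then have "vv * sinv X = 0" using eq by simp
    then have "sinv X = 0" using vv_nz by simp
    then have X0: "X = 0" using sinv_inj[of X 0] by simp
    define P1' where "P1' = (\<lambda>t. (fst t - 1, snd t)) ` P1"
    have inj: "inj_on (\<lambda>t. (fst t - 1, snd t)) P1"
      by (rule inj_onI) (auto simp: P1_def prod_eq_iff)
    have "X = (\<Sum>t\<in>P1'. C0 (d (fst t + 1) (snd t)) * Ei (fst t) (snd t))"
      unfolding P1'_def X_def sum.reindex[OF inj] by (rule sum.cong) (auto simp: P1_def)
    then have "(\<Sum>t\<in>P1'. C0 (d (fst t + 1) (snd t)) * Ei (fst t) (snd t)) = 0" using X0 by simp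
    moreover have "finite P1'" using fin1 by (simp add: P1'_def)
    moreover have "\<forall>t\<in>P1'. fst t < B" using bd by (auto simp: P1'_def P1_def)
    ultimately have d1': "\<forall>t\<in>P1'. d (fst t + 1) (snd t) = 0"
      using Suc.IH[rule_format, of P1' "\<lambda>i j. d (i + 1) j"] by simp
    have d1: "d (fst t) (snd t) = 0" if "t \<in> P1" for t
    proof -
      have "(fst t - 1, snd t) \<in> P1'" using that by (auto simp: P1'_def)
      then have "d (fst t - 1 + 1) (snd t) = 0" using d1' by auto
      then show ?thesis using that by (auto simp: P1_def)
    qed
    show "\<forall>t\<in>P. d (fst t) (snd t) = 0" using d0 d1 PP by auto
  qed
qed

lemma pair_indep:
  assumes "finite P" "(\<Sum>t\<in>P. C0 (d (fst t) (snd t)) * Ei (fst t) (snd t)) = 0" "t \<in> P"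
  shows "d (fst t) (snd t) = 0"
proof -
  obtain B where "\<forall>t\<in>P. fst t < B"
    using finite_nat_bounded[of "fst ` P"] assms(1) by (auto simp: lessThan_def)
  then show ?thesis using pair_indep_aux[of B] assms by blast
qed

lemma takeWhile_nw: "takeWhile (\<lambda>a. a = 1) (nw i j k) = replicate i (1::nat)"
proof -
  have "takeWhile (\<lambda>a. a = 1) (concat (replicate j [0,1]) @ replicate k (0::nat)) = []"
    by (cases j; cases k) auto
  then show ?thesis unfolding nw_def by (subst takeWhile_append2) auto
qed

lemma filter_01: "filter (\<lambda>a. a = Suc 0) (concat (replicate j [0,Suc 0])) = replicate j (Suc 0)"
  by (induction j) auto

lemma len_01: "length (concat (replicate j [0,Suc 0])) = 2 * j"
  by (induction j) auto

lemma nw_inj: "nw i j k = nw i' j' k' \<Longrightarrow> i = i' \<and> j = j' \<and> k = k'"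
proof -
  assume e: "nw i j k = nw i' j' k'"
  then have ii: "i = i'" using takeWhile_nw[of i j k] takeWhile_nw[of i' j' k'] by simp
  then have r: "concat (replicate j [0,1]) @ replicate k 0 = concat (replicate j' [0,1]) @ replicate k' (0::nat)"
    using e by (simp add: nw_def)
  then have "length (filter (\<lambda>a. a = Suc 0) (concat (replicate j [0,Suc 0]) @ replicate k 0)) =
             length (filter (\<lambda>a. a = Suc 0) (concat (replicate j' [0,Suc 0]) @ replicate k' (0::nat)))" by simp
  then have jj: "j = j'" by (simp add: filter_01)
  have "length (concat (replicate j [0,Suc 0]) @ replicate k 0) = length (concat (replicate j' [0,Suc 0]) @ replicate k' (0::nat))"
    using arg_cong[OF r, of length] by simp
  then have "k = k'" using jj by (simp add: len_01)
  with ii jj show ?thesis by simp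
qed

definition nw3 :: "nat \<times> nat \<times> nat \<Rightarrow> nat list" where "nw3 t = nw (fst t) (fst (snd t)) (snd (snd t))"

lemma inj_nw3: "inj nw3"
  by (rule injI) (auto simp: nw3_def prod_eq_iff dest: nw_inj)

lemma NF_indep:
  assumes kq: "Poly_Mapping.keys q \<subseteq> NF" and z: "Op q (dl 0 1) = (\<lambda>n. 0)"
  shows "q = 0"
proof (rule ccontr)
  assume "q \<noteq> 0"
  then obtain w0 where w0: "w0 \<in> Poly_Mapping.keys q" by (metis keys_eq_empty equals0I)
  define T where "T = nw3 -` Poly_Mapping.keys q"
  have finT: "finite T" unfolding T_def by (rule finite_vimageI[OF finite_keys inj_nw3])
  have "Poly_Mapping.keys q \<subseteq> range nw3"
  proof
    fix w assume "w \<in> Poly_Mapping.keys q"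
    then obtain i j k where "w = nw i j k" using kq by (auto simp: NF_def)
    then have "w = nw3 (i, j, k)" by (simp add: nw3_def)
    then show "w \<in> range nw3" by blast
  qed
  then have kT: "Poly_Mapping.keys q = nw3 ` T"
    unfolding T_def image_vimage_eq by blast
  obtain t0 where t0: "t0 \<in> T" "nw3 t0 = w0" using w0 kT by auto
  define c where "c t = Poly_Mapping.lookup q (nw3 t)" for t
  have c0: "c t0 \<noteq> 0" using t0 w0 by (simp add: c_def in_keys_iff)
  have opq: "Op q (dl 0 1) n = (\<Sum>t\<in>T. C0 (c t) * dl (int (snd (snd t)) - int (fst t)) (Ei (fst t) (fst (snd t))) n)" for n
  proof -
    have "Op q (dl 0 1) n = (\<Sum>w\<in>nw3 ` T. C0 (Poly_Mapping.lookup q w) * opw w (dl 0 1) n)"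
      by (simp add: Op_def kT)
    also have "\<dots> = (\<Sum>t\<in>T. C0 (c t) * opw (nw3 t) (dl 0 1) n)"
      by (simp add: sum.reindex[OF inj_on_subset[OF inj_nw3]] c_def)
    finally show ?thesis by (simp add: nw3_def opw_nw)
  qed
  define n0 where "n0 = int (snd (snd t0)) - int (fst t0)"
  define T0 where "T0 = {t\<in>T. n0 = int (snd (snd t)) - int (fst t)}"
  have "(\<Sum>t\<in>T. C0 (c t) * dl (int (snd (snd t)) - int (fst t)) (Ei (fst t) (fst (snd t))) n0)
      = (\<Sum>t\<in>T0. C0 (c t) * Ei (fst t) (fst (snd t)))"
    unfolding T0_def using finT by (simp add: dl_def sum.inter_filter[symmetric] if_distrib cong: if_cong)
  then have s0: "(\<Sum>t\<in>T0. C0 (c t) * Ei (fst t) (fst (snd t))) = 0" using opq[of n0] z by (simp add: fun_eq_iff)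
  define pr where "pr t = (fst t, fst (snd t))" for t :: "nat \<times> nat \<times> nat"
  have injpr: "inj_on pr T0"
    by (rule inj_onI) (auto simp: T0_def pr_def prod_eq_iff)
  define d where "d i j = c (i, j, nat (n0 + int i))" for i j
  have "(\<Sum>t\<in>pr ` T0. C0 (d (fst t) (snd t)) * Ei (fst t) (snd t)) = (\<Sum>t\<in>T0. C0 (c t) * Ei (fst t) (fst (snd t)))"
  proof (rule sum.reindex_cong[OF injpr refl])
    fix t assume "t \<in> T0"
    then have "nat (n0 + int (fst t)) = snd (snd t)" by (auto simp: T0_def)
    then show "C0 (d (fst (pr t)) (snd (pr t))) * Ei (fst (pr t)) (snd (pr t)) = C0 (c t) * Ei (fst t) (fst (snd t))"
      by (simp add: d_def pr_def)
  qed
  with s0 have s1: "(\<Sum>t\<in>pr ` T0. C0 (d (fst t) (snd t)) * Ei (fst t) (snd t)) = 0" by simp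
  have "t0 \<in> T0" using t0 by (simp add: T0_def n0_def)
  then have "pr t0 \<in> pr ` T0" by simp
  moreover have "finite (pr ` T0)" using finT by (simp add: T0_def)
  ultimately have "d (fst (pr t0)) (snd (pr t0)) = 0" using pair_indep[OF _ s1] by blast
  moreover have "nat (n0 + int (fst t0)) = snd (snd t0)" by (simp add: n0_def)
  ultimately have "c t0 = 0" by (simp add: d_def pr_def)
  with c0 show False by simp
qed

lemma faithful:
  assumes "p \<in> du_words" "Op p (dl 0 1) = (\<lambda>n. 0)"
  shows "p \<in> I"
proof -
  obtain q where q: "Poly_Mapping.keys q \<subseteq> NF" "p - q \<in> I" using span_words[OF assms(1)] by blast
  have "Op (p - q) (dl 0 1) = (\<lambda>n. 0)" using Op_ideal[OF q(2)] by simp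
  then have "Op q (dl 0 1) = (\<lambda>n. 0)" using assms(2) by (simp add: fun_eq_iff Op_diff)
  then have "q = 0" by (rule NF_indep[OF q(1)])
  then show ?thesis using q(2) by simp
qed

end

context du
begin

abbreviation W where "W \<equiv> (du_words :: 'k ncpoly set)"
abbreviation cls where "cls \<equiv> du_class \<alpha> \<beta>"
abbreviation car where "car \<equiv> du_carrier \<alpha> \<beta>"

definition rep :: "'k ncpoly set \<Rightarrow> 'k ncpoly" where "rep P = (SOME p. p \<in> P)"
definition OpA :: "'k ncpoly set \<Rightarrow> (int \<Rightarrow> 'k poly poly) \<Rightarrow> (int \<Rightarrow> 'k poly poly)" where
  "OpA P = Op (rep P)"

lemma cls_self: "p \<in> W \<Longrightarrow> p \<in> cls p"
  by (simp add: du_class_def du_ideal.zero)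
lemma cls_memD: "r \<in> cls p \<Longrightarrow> r \<in> W \<and> r - p \<in> I"
  by (simp add: du_class_def)
lemma rep_cls: "p \<in> W \<Longrightarrow> rep (cls p) \<in> cls p"
  unfolding rep_def by (rule someI[of _ p]) (rule cls_self)
lemma Op_eq_of_I: "p - q \<in> I \<Longrightarrow> Op p g = Op q g"
proof -
  assume "p - q \<in> I"
  then have "Op (p - q) g = (\<lambda>n. 0)" by (rule Op_ideal)
  then show ?thesis by (simp add: fun_eq_iff Op_diff)
qed
lemma OpA_cls: "p \<in> W \<Longrightarrow> OpA (cls p) = Op p"
  unfolding OpA_def using cls_memD[OF rep_cls] Op_eq_of_I by blast
lemma car_cls: "p \<in> W \<Longrightarrow> cls p \<in> car"
  by (simp add: du_carrier_def)
lemma carE: "P \<in> car \<Longrightarrow> \<exists>p\<in>W. P = cls p"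
  by (auto simp: du_carrier_def)
lemma cls_eq: "p \<in> W \<Longrightarrow> q \<in> W \<Longrightarrow> p - q \<in> I \<Longrightarrow> cls p = cls q"
proof -
  assume pq: "p - q \<in> I"
  have a: "r - q \<in> I" if "r - p \<in> I" for r
    using I_add[OF that pq] by simp
  have b: "r - p \<in> I" if "r - q \<in> I" for r
    using I_diff[OF that pq] by simp
  show ?thesis unfolding du_class_def using a b by blast
qed
lemma rep_W: "P \<in> car \<Longrightarrow> rep P \<in> W"
  using carE rep_cls cls_memD by blast
lemma cls_rep: "P \<in> car \<Longrightarrow> cls (rep P) = P"
proof -
  assume "P \<in> car"
  then obtain p where p: "p \<in> W" "P = cls p" using carE by blast
  then have "rep P \<in> W" "rep P - p \<in> I" using rep_cls cls_memD by auto
  then show ?thesis using cls_eq p by blast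
qed

lemma inj_OpA:
  assumes "P \<in> car" "Q \<in> car" "OpA P (dl 0 1) = OpA Q (dl 0 1)"
  shows "P = Q"
proof -
  obtain p q where pq: "p \<in> W" "P = cls p" "q \<in> W" "Q = cls q" using assms carE by metis
  then have "Op p (dl 0 1) = Op q (dl 0 1)" using assms(3) OpA_cls by simp
  then have "Op (p - q) (dl 0 1) = (\<lambda>n. 0)" by (simp add: fun_eq_iff Op_diff)
  then have "p - q \<in> I" using faithful words_diff pq by blast
  then show ?thesis using cls_eq pq by simp
qed

lemma add_eq: "du_add \<alpha> \<beta> P Q = cls (rep P + rep Q)" by (simp add: du_add_def rep_def)
lemma mult_eq: "du_mult \<alpha> \<beta> P Q = cls (nc_mult (rep P) (rep Q))" by (simp add: du_mult_def rep_def)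
lemma smul_eq: "du_smul \<alpha> \<beta> c P = cls (nc_smul c (rep P))" by (simp add: du_smul_def rep_def)

lemma add_car: "P \<in> car \<Longrightarrow> Q \<in> car \<Longrightarrow> du_add \<alpha> \<beta> P Q \<in> car"
  unfolding add_eq by (intro car_cls words_add rep_W)
lemma OpA_add: "P \<in> car \<Longrightarrow> Q \<in> car \<Longrightarrow> OpA (du_add \<alpha> \<beta> P Q) g n = OpA P g n + OpA Q g n"
proof -
  assume a: "P \<in> car" "Q \<in> car"
  have "OpA (cls (rep P + rep Q)) = Op (rep P + rep Q)" by (intro OpA_cls words_add rep_W a)
  then show ?thesis unfolding add_eq by (simp add: Op_add OpA_def)
qed
lemma mult_car: "P \<in> car \<Longrightarrow> Q \<in> car \<Longrightarrow> du_mult \<alpha> \<beta> P Q \<in> car"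
  unfolding mult_eq by (intro car_cls words_mult rep_W)
lemma OpA_mult: "P \<in> car \<Longrightarrow> Q \<in> car \<Longrightarrow> OpA (du_mult \<alpha> \<beta> P Q) g = OpA P (OpA Q g)"
proof -
  assume a: "P \<in> car" "Q \<in> car"
  have "OpA (cls (nc_mult (rep P) (rep Q))) = Op (nc_mult (rep P) (rep Q))" by (intro OpA_cls words_mult rep_W a)
  then show ?thesis unfolding mult_eq by (simp add: Op_mult OpA_def)
qed
lemma smul_car: "P \<in> car \<Longrightarrow> du_smul \<alpha> \<beta> c P \<in> car"
  unfolding smul_eq by (intro car_cls words_smul rep_W)
lemma OpA_smul: "P \<in> car \<Longrightarrow> OpA (du_smul \<alpha> \<beta> c P) g n = C0 c * OpA P g n"
proof -
  assume a: "P \<in> car"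
  have "OpA (cls (nc_smul c (rep P))) = Op (nc_smul c (rep P))" by (intro OpA_cls words_smul rep_W a)
  then show ?thesis unfolding smul_eq by (simp add: Op_smul OpA_def)
qed
lemma one_car: "du_one \<alpha> \<beta> \<in> car"
  unfolding du_one_def by (rule car_cls[OF words_nc_one])
lemma OpA_one: "OpA (du_one \<alpha> \<beta>) g = g"
  unfolding du_one_def by (simp add: OpA_cls[OF words_nc_one] Op_one)
lemma x_car: "du_x \<alpha> \<beta> \<in> car"
  unfolding du_x_def by (rule car_cls[OF words_var0])
lemma OpA_x: "OpA (du_x \<alpha> \<beta>) g = letter 0 g"
  unfolding du_x_def by (simp add: OpA_cls[OF words_var0] Op_var0)
lemma y_car: "du_y \<alpha> \<beta> \<in> car"
  unfolding du_y_def by (rule car_cls[OF words_var1])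
lemma OpA_y: "OpA (du_y \<alpha> \<beta>) g = letter 1 g"
  unfolding du_y_def OpA_cls[OF words_var1] Op_var1 ..

definition lin_op :: "((int \<Rightarrow> 'k poly poly) \<Rightarrow> (int \<Rightarrow> 'k poly poly)) \<Rightarrow> bool" where
  "lin_op F \<longleftrightarrow> (\<forall>f h. F (\<lambda>n. f n + h n) = (\<lambda>n. F f n + F h n))
     \<and> (\<forall>c f. F (\<lambda>n. C0 c * f n) = (\<lambda>n. C0 c * F f n)) \<and> F (\<lambda>n. 0) = (\<lambda>n. 0)"

lemma lin_op_sum: "lin_op F \<Longrightarrow> F (\<lambda>n. \<Sum>i\<in>S. f i n) = (\<lambda>n. \<Sum>i\<in>S. F (f i) n)"
proof (induction S rule: infinite_finite_induct)
  case (infinite S) then show ?case by (simp add: lin_op_def)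
next
  case empty then show ?case by (simp add: lin_op_def)
next
  case (insert x F')
  then show ?case by (simp add: lin_op_def)
qed

lemma lin_op_letter: "lin_op (letter a)"
  by (simp add: lin_op_def letter_add letter_scal letter_zero)
lemma lin_op_pow: "lin_op F \<Longrightarrow> lin_op (F ^^ n)"
  by (induction n) (simp_all add: lin_op_def)

lemma commute_opw:
  assumes "Z \<circ> letter 0 = letter 0 \<circ> Z" "Z \<circ> letter 1 = letter 1 \<circ> Z" "set w \<subseteq> {0,1}"
  shows "Z (opw w g) = opw w (Z g)"
  using assms(3)
proof (induction w)
  case Nil then show ?case by simp
next
  case (Cons a w)
  then have "a = 0 \<or> a = 1" by auto
  then have "Z (letter a h) = letter a (Z h)" for h using assms(1,2) by (auto simp: fun_eq_iff)
  then show ?case using Cons by simp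
qed

lemma commute_Op:
  assumes "lin_op Z" "Z \<circ> letter 0 = letter 0 \<circ> Z" "Z \<circ> letter 1 = letter 1 \<circ> Z" "p \<in> W"
  shows "Z (Op p g) = Op p (Z g)"
proof -
  have "Z (Op p g) = (\<lambda>n. \<Sum>w\<in>Poly_Mapping.keys p. Z (\<lambda>n. C0 (Poly_Mapping.lookup p w) * opw w g n) n)"
    unfolding Op_def by (rule lin_op_sum[OF assms(1)])
  also have "\<dots> = (\<lambda>n. \<Sum>w\<in>Poly_Mapping.keys p. C0 (Poly_Mapping.lookup p w) * opw w (Z g) n)"
  proof -
    have "Z (\<lambda>n. C0 (Poly_Mapping.lookup p w) * opw w g n) n = C0 (Poly_Mapping.lookup p w) * opw w (Z g) n"
      if "w \<in> Poly_Mapping.keys p" for w n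
    proof -
      have "set w \<subseteq> {0,1}" using assms(4) that by (auto simp: du_words_def)
      then show ?thesis using assms(1) commute_opw[OF assms(2,3)] by (simp add: lin_op_def)
    qed
    then show ?thesis by (simp add: fun_eq_iff)
  qed
  finally show ?thesis by (simp add: Op_def)
qed

lemma central:
  assumes "Z \<in> car" "lin_op (OpA Z)" "OpA Z \<circ> letter 0 = letter 0 \<circ> OpA Z" "OpA Z \<circ> letter 1 = letter 1 \<circ> OpA Z"
  shows "Z \<in> du_center \<alpha> \<beta>"
  unfolding du_center_def
proof (intro CollectI conjI ballI assms(1))
  fix P assume P: "P \<in> car"
  show "du_mult \<alpha> \<beta> Z P = du_mult \<alpha> \<beta> P Z"
  proof (rule inj_OpA)
    show "du_mult \<alpha> \<beta> Z P \<in> car" "du_mult \<alpha> \<beta> P Z \<in> car" using mult_car assms(1) P by auto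
    have "OpA Z (OpA P (dl 0 1)) = OpA P (OpA Z (dl 0 1))"
      unfolding OpA_def[of P] by (rule commute_Op[OF assms(2-4) rep_W[OF P]])
    then show "OpA (du_mult \<alpha> \<beta> Z P) (dl 0 1) = OpA (du_mult \<alpha> \<beta> P Z) (dl 0 1)"
      using OpA_mult assms(1) P by simp
  qed
qed

primrec Apow :: "'k ncpoly set \<Rightarrow> nat \<Rightarrow> 'k ncpoly set" where
  "Apow P 0 = du_one \<alpha> \<beta>"
| "Apow P (Suc n) = du_mult \<alpha> \<beta> P (Apow P n)"

lemma Apow_car: "P \<in> car \<Longrightarrow> Apow P n \<in> car"
  by (induction n) (simp_all add: one_car mult_car)
lemma OpA_Apow: "P \<in> car \<Longrightarrow> OpA (Apow P n) = OpA P ^^ n"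
proof (induction n)
  case 0 show ?case by (rule ext) (simp add: OpA_one)
next
  case (Suc n)
  show ?case
  proof
    fix g
    have "OpA (Apow P (Suc n)) g = OpA P (OpA (Apow P n) g)" using Suc.prems Apow_car by (simp add: OpA_mult)
    then show "OpA (Apow P (Suc n)) g = (OpA P ^^ Suc n) g" using Suc by simp
  qed
qed

lemma aut_Apow:
  assumes "du_is_aut \<alpha> \<beta> \<phi>" "P \<in> car"
  shows "\<phi> (Apow P n) = Apow (\<phi> P) n"
proof (induction n)
  case 0 then show ?case using assms(1) by (simp add: du_is_aut_def)
next
  case (Suc n)
  have "\<phi> (du_mult \<alpha> \<beta> P (Apow P n)) = du_mult \<alpha> \<beta> (\<phi> P) (\<phi> (Apow P n))"
    using assms Apow_car[OF assms(2)] by (simp add: du_is_aut_def)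
  then show ?case using Suc by simp
qed

lemma aut_car: "du_is_aut \<alpha> \<beta> \<phi> \<Longrightarrow> P \<in> car \<Longrightarrow> \<phi> P \<in> car"
  by (auto simp: du_is_aut_def bij_betw_def)

end

context du
begin

definition spow :: "int \<Rightarrow> 'k poly poly \<Rightarrow> 'k poly poly" where
  "spow d = (if 0 \<le> d then sig ^^ nat d else sinv ^^ nat (- d))"

lemma spow_neg: "d \<le> 0 \<Longrightarrow> spow d = sinv ^^ nat (- d)"
  by (cases "d = 0") (simp_all add: spow_def)

lemma sig_spow: "sig (spow d x) = spow (d + 1) x"
proof (cases "0 \<le> d")
  case True
  then have "nat (d + 1) = Suc (nat d)" by simp
  then show ?thesis using True by (simp add: spow_def)
next
  case False
  then have e: "nat (- d) = Suc (nat (- (d + 1)))" by simp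
  have "spow d x = sinv ((sinv ^^ nat (- (d + 1))) x)" using False by (simp add: spow_neg e)
  moreover have "spow (d + 1) x = (sinv ^^ nat (- (d + 1))) x" using False by (simp add: spow_neg)
  ultimately show ?thesis by simp
qed

lemma sinv_spow: "sinv (spow d x) = spow (d - 1) x"
proof -
  have "sig (spow (d - 1) x) = spow d x" using sig_spow[of "d - 1" x] by simp
  then have "sinv (sig (spow (d - 1) x)) = sinv (spow d x)" by simp
  then show ?thesis by simp
qed

lemma rhom_funpow: fixes h :: "'a::comm_ring_1 \<Rightarrow> 'a" shows "rhom h \<Longrightarrow> rhom (h ^^ n)"
proof (induction n)
  case 0
  have "h ^^ 0 = id" by simp
  then show ?case using rhom_id by (simp add: id_def)
next
  case (Suc n)
  have "h ^^ Suc n = h \<circ> h ^^ n" by (rule funpow.simps(2))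
  then show ?case using rhom_comp[OF Suc.prems Suc.IH[OF Suc.prems]] by (simp add: comp_def)
qed

lemma rhom_spow: "rhom (spow d)"
  unfolding spow_def using rhom_funpow[OF rhom_sig] rhom_funpow[OF rhom_sinv] by simp

lemma spow_mult: "spow d (a * b) = spow d a * spow d b" by (rule rhom_mult[OF rhom_spow])
lemma spow_1: "spow d 1 = 1" by (rule rhom_one[OF rhom_spow])
lemma spow_0: "spow d 0 = 0" by (rule rhom_zero[OF rhom_spow])

lemma sig_pow_inj: "(sig ^^ n) x = 0 \<Longrightarrow> x = 0"
proof (induction n)
  case (Suc n)
  then have "sig ((sig ^^ n) x) = 0" by simp
  then have "(sig ^^ n) x = 0" using sinv_sig[of "(sig ^^ n) x"] by simp
  then show ?case using Suc.IH by simp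
qed simp
lemma sinv_pow_inj: "(sinv ^^ n) x = 0 \<Longrightarrow> x = 0"
proof (induction n)
  case (Suc n)
  then have "sinv ((sinv ^^ n) x) = 0" by simp
  then have "(sinv ^^ n) x = 0" using sig_sinv[of "(sinv ^^ n) x"] by simp
  then show ?case using Suc.IH by simp
qed simp
lemma spow_nz: "x \<noteq> 0 \<Longrightarrow> spow d x \<noteq> 0"
proof
  assume x: "x \<noteq> 0" and s: "spow d x = 0"
  show False
  proof (cases "0 \<le> d")
    case True
    then have "(sig ^^ nat d) x = 0" using s by (simp add: spow_def)
    then show False using x sig_pow_inj by blast
  next
    case False
    then have "(sinv ^^ nat (- d)) x = 0" using s by (simp add: spow_def)
    then show False using x sinv_pow_inj by blast
  qed
qed

fun dw :: "nat list \<Rightarrow> int" where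
  "dw [] = 0"
| "dw (a # w) = (if a = 0 then dw w + 1 else dw w - 1)"

fun mw :: "nat list \<Rightarrow> 'k poly poly" where
  "mw [] = 1"
| "mw (a # w) = (if a = 0 then sig (mw w) else vv * sinv (mw w))"

lemma opw_formula: "set w \<subseteq> {0,1} \<Longrightarrow> opw w g k = mw w * spow (dw w) (g (k - dw w))"
proof (induction w arbitrary: k)
  case Nil then show ?case by (simp add: spow_def)
next
  case (Cons a w)
  then have a: "a = 0 \<or> a = 1" and IH: "\<And>k. opw w g k = mw w * spow (dw w) (g (k - dw w))" by auto
  show ?case
  proof (cases "a = 0")
    case True
    then show ?thesis using IH by (simp add: letter_def sig_spow algebra_simps)
  next
    case False
    then have "a = 1" using a by simp
    then show ?thesis using IH by (simp add: letter_def sinv_spow algebra_simps)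
  qed
qed

lemma sum_eq_single:
  assumes "finite D" "x \<in> D" "\<And>y. y \<in> D \<Longrightarrow> y \<noteq> x \<Longrightarrow> f y = 0"
  shows "sum f D = f x"
proof -
  have "sum f D = f x + sum f (D - {x})" by (rule sum.remove[OF assms(1,2)])
  also have "sum f (D - {x}) = 0" by (rule sum.neutral) (use assms(3) in auto)
  finally show ?thesis by simp
qed

definition conv :: "int set \<Rightarrow> (int \<Rightarrow> 'k poly poly) \<Rightarrow> (int \<Rightarrow> 'k poly poly) \<Rightarrow> (int \<Rightarrow> 'k poly poly)" where
  "conv D a g = (\<lambda>k. \<Sum>d\<in>D. a d * spow d (g (k - d)))"

definition sa :: "'k ncpoly \<Rightarrow> int \<Rightarrow> 'k poly poly" where
  "sa p d = (\<Sum>w\<in>{w\<in>Poly_Mapping.keys p. dw w = d}. C0 (Poly_Mapping.lookup p w) * mw w)"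

lemma Op_conv: "p \<in> W \<Longrightarrow> Op p g = conv (dw ` Poly_Mapping.keys p) (sa p) g"
proof
  fix k assume p: "p \<in> W"
  have "Op p g k = (\<Sum>w\<in>Poly_Mapping.keys p. C0 (Poly_Mapping.lookup p w) * (mw w * spow (dw w) (g (k - dw w))))"
    unfolding Op_def using p by (intro sum.cong refl) (auto simp: du_words_def opw_formula)
  also have "\<dots> = (\<Sum>d\<in>dw ` Poly_Mapping.keys p. \<Sum>w\<in>{w\<in>Poly_Mapping.keys p. dw w = d}.
        C0 (Poly_Mapping.lookup p w) * (mw w * spow (dw w) (g (k - dw w))))"
    by (rule sum.group[symmetric]) auto
  also have "\<dots> = conv (dw ` Poly_Mapping.keys p) (sa p) g k"
    unfolding conv_def sa_def sum_distrib_right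
    by (intro sum.cong refl) (auto simp: algebra_simps)
  finally show "Op p g k = conv (dw ` Poly_Mapping.keys p) (sa p) g k" .
qed

lemma conv_top:
  assumes D: "finite D" "hi \<in> D" "a hi \<noteq> 0" "\<forall>d\<in>D. hi < d \<longrightarrow> a d = 0"
    and g: "g m \<noteq> 0" "\<forall>j>m. g j = 0"
  shows "conv D a g (m + hi) \<noteq> 0" "\<forall>k>m+hi. conv D a g k = 0"
proof -
  have z: "a d * spow d (g (k - d)) = 0" if "d \<in> D" "k > m + hi \<or> (k = m + hi \<and> d \<noteq> hi)" for d k
  proof (cases "hi < d")
    case True then show ?thesis using D that by simp
  next
    case False
    then have "k - d > m" using that by auto
    then show ?thesis using g by (simp add: spow_0)
  qed
  show "\<forall>k>m+hi. conv D a g k = 0" unfolding conv_def using z by (auto intro!: sum.neutral)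
  have "conv D a g (m + hi) = a hi * spow hi (g (m + hi - hi))"
    unfolding conv_def
    by (rule sum_eq_single[OF D(1,2)]) (use z in auto)
  also have "\<dots> \<noteq> 0" using D(3) g(1) spow_nz by simp
  finally show "conv D a g (m + hi) \<noteq> 0" .
qed

lemma conv_bot:
  assumes D: "finite D" "lo \<in> D" "a lo \<noteq> 0" "\<forall>d\<in>D. d < lo \<longrightarrow> a d = 0"
    and g: "g m \<noteq> 0" "\<forall>j<m. g j = 0"
  shows "conv D a g (m + lo) \<noteq> 0" "\<forall>k<m+lo. conv D a g k = 0"
proof -
  have z: "a d * spow d (g (k - d)) = 0" if "d \<in> D" "k < m + lo \<or> (k = m + lo \<and> d \<noteq> lo)" for d k
  proof (cases "d < lo")
    case True then show ?thesis using D that by simp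
  next
    case False
    then have "k - d < m" using that by auto
    then show ?thesis using g by (simp add: spow_0)
  qed
  show "\<forall>k<m+lo. conv D a g k = 0" unfolding conv_def using z by (auto intro!: sum.neutral)
  have "conv D a g (m + lo) = a lo * spow lo (g (m + lo - lo))"
    unfolding conv_def
    by (rule sum_eq_single[OF D(1,2)]) (use z in auto)
  also have "\<dots> \<noteq> 0" using D(3) g(1) spow_nz by simp
  finally show "conv D a g (m + lo) \<noteq> 0" .
qed

lemma conv_iter_top:
  assumes D: "finite D" "hi \<in> D" "a hi \<noteq> 0" "\<forall>d\<in>D. hi < d \<longrightarrow> a d = 0"
  shows "(conv D a ^^ n) (dl 0 1) (int n * hi) \<noteq> 0 \<and> (\<forall>k>int n * hi. (conv D a ^^ n) (dl 0 1) k = 0)"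
proof (induction n)
  case 0 then show ?case by (simp add: dl_def)
next
  case (Suc n)
  have "int (Suc n) * hi = int n * hi + hi" by (simp add: algebra_simps)
  then show ?case using conv_top[OF D, of "(conv D a ^^ n) (dl 0 1)" "int n * hi"] Suc by simp
qed

lemma conv_iter_bot:
  assumes D: "finite D" "lo \<in> D" "a lo \<noteq> 0" "\<forall>d\<in>D. d < lo \<longrightarrow> a d = 0"
  shows "(conv D a ^^ n) (dl 0 1) (int n * lo) \<noteq> 0 \<and> (\<forall>k<int n * lo. (conv D a ^^ n) (dl 0 1) k = 0)"
proof (induction n)
  case 0 then show ?case by (simp add: dl_def)
next
  case (Suc n)
  have "int (Suc n) * lo = int n * lo + lo" by (simp add: algebra_simps)
  then show ?case using conv_bot[OF D, of "(conv D a ^^ n) (dl 0 1)" "int n * lo"] Suc by simp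
qed

lemma conv_zero_pow:
  assumes "\<forall>d\<in>D. a d = 0" "n \<ge> 1"
  shows "(conv D a ^^ n) g = (\<lambda>k. 0)"
proof -
  obtain m where "n = Suc m" using assms(2) by (cases n) auto
  then show ?thesis using assms(1) by (simp add: conv_def fun_eq_iff)
qed

lemma shape:
  assumes P: "P \<in> car" and N: "N \<ge> 1" and e: "e = 1 \<or> e = -1"
    and pw: "(OpA P ^^ N) (dl 0 1) = dl (int N * e) T" and T: "T \<noteq> 0"
  shows "\<exists>r. \<forall>g k. OpA P g k = r * spow e (g (k - e))"
proof -
  define p where "p = rep P"
  have pW: "p \<in> W" using rep_W[OF P] by (simp add: p_def)
  define D where "D = dw ` Poly_Mapping.keys p"
  define a where "a = sa p"
  have OpP: "OpA P = conv D a" unfolding OpA_def using Op_conv[OF pW] by (simp add: fun_eq_iff p_def D_def a_def)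
  have finD: "finite D" by (simp add: D_def)
  define D' where "D' = {d\<in>D. a d \<noteq> 0}"
  have finD': "finite D'" using finD by (simp add: D'_def)
  have ne: "D' \<noteq> {}"
  proof
    assume "D' = {}"
    then have "\<forall>d\<in>D. a d = 0" by (auto simp: D'_def)
    then have "(OpA P ^^ N) (dl 0 1) = (\<lambda>k. 0)" using OpP conv_zero_pow N by simp
    then have "dl (int N * e) T (int N * e) = 0" using pw by simp
    then show False using T by (simp add: dl_def)
  qed
  define hi where "hi = Max D'"
  define lo where "lo = Min D'"
  have hiD: "hi \<in> D'" using finD' ne by (simp add: hi_def)
  have loD: "lo \<in> D'" using finD' ne by (simp add: lo_def)
  have hi_max: "\<forall>d\<in>D. hi < d \<longrightarrow> a d = 0"
    using finD' by (auto simp: hi_def D'_def) (metis (mono_tags, lifting) Max_ge finD' mem_Collect_eq not_le D'_def)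
  have lo_min: "\<forall>d\<in>D. d < lo \<longrightarrow> a d = 0"
    using finD' by (auto simp: lo_def D'_def) (metis (mono_tags, lifting) Min_le finD' mem_Collect_eq not_le D'_def)
  have t: "(conv D a ^^ N) (dl 0 1) (int N * hi) \<noteq> 0"
    using conv_iter_top[OF finD _ _ hi_max] hiD by (auto simp: D'_def)
  have b: "(conv D a ^^ N) (dl 0 1) (int N * lo) \<noteq> 0"
    using conv_iter_bot[OF finD _ _ lo_min] loD by (auto simp: D'_def)
  have "int N * hi = int N * e" using t pw OpP by (auto simp: dl_def split: if_splits)
  then have hie: "hi = e" using N by simp
  have "int N * lo = int N * e" using b pw OpP by (auto simp: dl_def split: if_splits)
  then have loe: "lo = e" using N by simp
  have only: "a d = 0" if "d \<in> D" "d \<noteq> e" for d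
    using hi_max lo_min hie loe that by (cases "d < e") auto
  have eD: "e \<in> D" using hiD hie by (simp add: D'_def)
  show ?thesis
  proof (intro exI allI)
    fix g k
    have "OpA P g k = (\<Sum>d\<in>D. a d * spow d (g (k - d)))" by (simp add: OpP conv_def)
    also have "\<dots> = a e * spow e (g (k - e))"
      by (rule sum_eq_single[OF finD eD]) (use only in auto)
    finally show "OpA P g k = a e * spow e (g (k - e))" .
  qed
qed

end

lemma unit_C0:
  fixes r :: "'k::field poly poly"
  assumes "r * t = 1"
  shows "\<exists>c. r = C0 c"
proof -
  have "r dvd 1" using assms by (metis dvdI)
  then obtain c' where c': "r = [:c':]" "c' dvd 1" using is_unit_poly_iff by blast
  then obtain c where "c' = [:c:]" using is_unit_poly_iff by blast
  then show ?thesis using c' by (auto simp: C0_def)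
qed

context du
begin

lemma letter0_eq: "letter 0 g k = sig (g (k - 1))" by (simp add: letter_def)
lemma letter1_eq: "letter (Suc 0) g k = vv * sinv (g (k + 1))" by (simp add: letter_def)
lemma Fv_apply: "Fv r = vv * sinv r" by (simp add: Fv_def)

lemma L0pow: "(letter 0 ^^ n) g k = (sig ^^ n) (g (k - int n))"
proof (induction n arbitrary: k)
  case 0 then show ?case by simp
next
  case (Suc n)
  have "(letter 0 ^^ Suc n) g k = sig ((letter 0 ^^ n) g (k - 1))" by (simp add: letter0_eq)
  also have "\<dots> = (sig ^^ Suc n) (g (k - int (Suc n)))" using Suc by (simp add: algebra_simps)
  finally show ?case .
qed

primrec Qf :: "nat \<Rightarrow> 'k poly poly" where
  "Qf 0 = 1"
| "Qf (Suc n) = vv * sinv (Qf n)"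

lemma L1pow: "(letter (Suc 0) ^^ n) g k = Qf n * (sinv ^^ n) (g (k + int n))"
proof (induction n arbitrary: k)
  case 0 then show ?case by simp
next
  case (Suc n)
  have "(letter (Suc 0) ^^ Suc n) g k = vv * sinv ((letter (Suc 0) ^^ n) g (k + 1))" by (simp add: letter1_eq)
  also have "\<dots> = Qf (Suc n) * (sinv ^^ Suc n) (g (k + int (Suc n)))"
    using Suc by (simp add: algebra_simps)
  finally show ?case .
qed

lemma sig_sinvpow: "sig ((sinv ^^ n) x) = (sinv ^^ n) (sig x)"
proof (induction n arbitrary: x)
  case (Suc n)
  have "(sinv ^^ Suc n) (sig x) = sinv ((sinv ^^ n) (sig x))" by simp
  also have "\<dots> = sinv (sig ((sinv ^^ n) x))" using Suc.IH by simp
  also have "\<dots> = (sinv ^^ n) x" by simp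
  finally show ?case by simp
qed simp
lemma sigpow_sinv: "(sig ^^ n) (sinv x) = sinv ((sig ^^ n) x)"
  by (induction n arbitrary: x) simp_all
lemma sinvpow_sigpow: "(sinv ^^ n) ((sig ^^ n) x) = x"
  by (induction n arbitrary: x) (simp_all add: sig_sinvpow[symmetric] funpow_swap1)

lemma rhom_sigpow: "rhom (sig ^^ n)" by (rule rhom_funpow[OF rhom_sig])
lemma rhom_sinvpow: "rhom (sinv ^^ n)" by (rule rhom_funpow[OF rhom_sinv])

lemma Fv_Suc: "Qf (Suc m) = Qf m * (sinv ^^ m) vv"
proof (induction m)
  case 0 then show ?case by simp
next
  case (Suc m)
  have "Qf (Suc (Suc m)) = vv * sinv (Qf (Suc m))" by simp
  also have "\<dots> = vv * sinv (Qf m) * (sinv ^^ Suc m) vv" using Suc by (simp add: mult.assoc)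
  also have "\<dots> = Qf (Suc m) * (sinv ^^ Suc m) vv" by simp
  finally show ?case .
qed

lemma Q_nz: "Qf n \<noteq> 0"
proof (induction n)
  case 0 then show ?case by simp
next
  case (Suc n)
  have "sinv (Qf n) \<noteq> 0" using Suc sinv_inj[of "Qf n" 0] by auto
  then show ?case using vv_nz by simp
qed

lemma sig_Q:
  assumes N: "N \<ge> 1" and h: "(sig ^^ N) vv = vv"
  shows "sig (Qf N) = Qf N"
proof -
  obtain m where m: "N = Suc m" using N by (cases N) auto
  have "(sig ^^ m) uu = vv" using h by (simp add: m funpow_Suc_right del: funpow.simps)
  then have "(sinv ^^ m) vv = uu" using sinvpow_sigpow[of m uu] by simp
  moreover have "Qf N = Qf m * (sinv ^^ m) vv" unfolding m by (rule Fv_Suc)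
  ultimately have "Qf N = Qf m * uu" by simp
  moreover have "sig (Qf N) = uu * Qf m" by (simp add: m)
  ultimately show ?thesis by (simp add: mult.commute)
qed

lemma OpA_x_fun: "OpA (du_x \<alpha> \<beta>) = letter 0" by (rule ext) (rule OpA_x)
lemma OpA_y_fun: "OpA (du_y \<alpha> \<beta>) = letter (Suc 0)" using OpA_y by (simp add: fun_eq_iff)

lemma x_central:
  assumes N: "N \<ge> 1" and h: "(sig ^^ N) vv = vv"
  shows "Apow (du_x \<alpha> \<beta>) N \<in> du_center \<alpha> \<beta>"
proof (rule central)
  have O: "OpA (Apow (du_x \<alpha> \<beta>) N) = letter 0 ^^ N" by (simp add: OpA_Apow x_car OpA_x_fun)
  show "Apow (du_x \<alpha> \<beta>) N \<in> car" by (rule Apow_car[OF x_car])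
  show "lin_op (OpA (Apow (du_x \<alpha> \<beta>) N))" unfolding O by (intro lin_op_pow lin_op_letter)
  show "OpA (Apow (du_x \<alpha> \<beta>) N) \<circ> letter 0 = letter 0 \<circ> OpA (Apow (du_x \<alpha> \<beta>) N)"
    unfolding O by (rule ext) (simp add: funpow_swap1)
  show "OpA (Apow (du_x \<alpha> \<beta>) N) \<circ> letter 1 = letter 1 \<circ> OpA (Apow (du_x \<alpha> \<beta>) N)"
    unfolding O
  proof (intro ext)
    fix g k
    have "((letter 0 ^^ N) \<circ> letter 1) g k = (sig ^^ N) (vv * sinv (g (k - int N + 1)))"
      by (simp add: L0pow letter1_eq del: funpow.simps)
    also have "\<dots> = vv * sinv ((sig ^^ N) (g (k - int N + 1)))"
      using h by (simp add: rhom_mult[OF rhom_sigpow] sigpow_sinv del: funpow.simps)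
    also have "\<dots> = (letter 1 \<circ> (letter 0 ^^ N)) g k"
      by (simp add: L0pow letter1_eq algebra_simps del: funpow.simps)
    finally show "((letter 0 ^^ N) \<circ> letter 1) g k = (letter 1 \<circ> (letter 0 ^^ N)) g k" .
  qed
qed

lemma y_central:
  assumes N: "N \<ge> 1" and h: "(sig ^^ N) vv = vv"
  shows "Apow (du_y \<alpha> \<beta>) N \<in> du_center \<alpha> \<beta>"
proof (rule central)
  have O: "OpA (Apow (du_y \<alpha> \<beta>) N) = letter 1 ^^ N" by (simp add: OpA_Apow y_car OpA_y_fun)
  show "Apow (du_y \<alpha> \<beta>) N \<in> car" by (rule Apow_car[OF y_car])
  show "lin_op (OpA (Apow (du_y \<alpha> \<beta>) N))" unfolding O by (intro lin_op_pow lin_op_letter)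
  show "OpA (Apow (du_y \<alpha> \<beta>) N) \<circ> letter 1 = letter 1 \<circ> OpA (Apow (du_y \<alpha> \<beta>) N)"
    unfolding O by (rule ext) (simp add: funpow_swap1)
  show "OpA (Apow (du_y \<alpha> \<beta>) N) \<circ> letter 0 = letter 0 \<circ> OpA (Apow (du_y \<alpha> \<beta>) N)"
    unfolding O
  proof (intro ext)
    fix g k
    have "((letter 1 ^^ N) \<circ> letter 0) g k = Qf N * (sinv ^^ N) (sig (g (k + int N - 1)))"
      by (simp add: L1pow letter0_eq del: funpow.simps)
    also have "\<dots> = sig (Qf N) * sig ((sinv ^^ N) (g (k + int N - 1)))"
      using sig_Q[OF N h] by (simp add: sig_sinvpow del: funpow.simps)
    also have "\<dots> = (letter 0 \<circ> (letter 1 ^^ N)) g k"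
      by (simp add: L1pow letter0_eq algebra_simps del: funpow.simps)
    finally show "((letter 1 ^^ N) \<circ> letter 0) g k = (letter 0 \<circ> (letter 1 ^^ N)) g k" .
  qed
qed

lemma nf_div:
  assumes P: "P \<in> car"
  shows "\<exists>s. OpA P (dl 0 1) (-1) = vv * s"
proof -
  have pW: "rep P \<in> W" by (rule rep_W[OF P])
  obtain q where q: "Poly_Mapping.keys q \<subseteq> NF" "rep P - q \<in> I" using span_words[OF pW] by blast
  have OP: "OpA P = Op q" unfolding OpA_def using Op_eq_of_I[OF q(2)] by (simp add: fun_eq_iff)
  have "\<forall>w\<in>Poly_Mapping.keys q. \<exists>t. C0 (Poly_Mapping.lookup q w) * opw w (dl 0 1) (-1) = vv * t"
  proof
    fix w assume "w \<in> Poly_Mapping.keys q"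
    then obtain i j k where w: "w = nw i j k" using q(1) by (auto simp: NF_def)
    show "\<exists>t. C0 (Poly_Mapping.lookup q w) * opw w (dl 0 1) (-1) = vv * t"
    proof (cases "(-1::int) = int k - int i")
      case True
      then obtain i' where i': "i = Suc i'" by (cases i) auto
      have "opw w (dl 0 1) (-1) = Ei i j" using True by (simp add: w opw_nw, simp add: dl_def)
      also have "\<dots> = vv * sinv (Ei i' j)" by (simp add: Ei_def i' Fv_apply)
      finally show ?thesis by (intro exI[of _ "C0 (Poly_Mapping.lookup q w) * sinv (Ei i' j)"]) (simp add: algebra_simps)
    next
      case False
      then have "opw w (dl 0 1) (-1) = 0" by (simp add: w opw_nw, simp add: dl_def)
      then show ?thesis by (intro exI[of _ 0]) simp
    qed
  qed
  then obtain tf where tf: "\<forall>w\<in>Poly_Mapping.keys q. C0 (Poly_Mapping.lookup q w) * opw w (dl 0 1) (-1) = vv * tf w"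
    by metis
  have "OpA P (dl 0 1) (-1) = vv * (\<Sum>w\<in>Poly_Mapping.keys q. tf w)"
    unfolding OP Op_def sum_distrib_left using tf by (intro sum.cong) auto
  then show ?thesis by blast
qed

lemma Oz_fix: "\<phi> \<in> du_Oz \<alpha> \<beta> \<Longrightarrow> Z \<in> du_center \<alpha> \<beta> \<Longrightarrow> \<phi> Z = Z"
  by (simp add: du_Oz_def)
lemma Oz_aut: "\<phi> \<in> du_Oz \<alpha> \<beta> \<Longrightarrow> du_is_aut \<alpha> \<beta> \<phi>"
  by (simp add: du_Oz_def)

lemma spow_1': "spow 1 = sig" by (simp add: spow_def)
lemma spow_m1: "spow (-1) = sinv" by (simp add: spow_def)

lemma phi_x:
  assumes phi: "\<phi> \<in> du_Oz \<alpha> \<beta>" and N: "N \<ge> 1" and h: "(sig ^^ N) vv = vv"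
  shows "\<exists>c. \<phi> (du_x \<alpha> \<beta>) = du_smul \<alpha> \<beta> c (du_x \<alpha> \<beta>)"
proof -
  define P where "P = \<phi> (du_x \<alpha> \<beta>)"
  have aut: "du_is_aut \<alpha> \<beta> \<phi>" by (rule Oz_aut[OF phi])
  have Pc: "P \<in> car" unfolding P_def by (rule aut_car[OF aut x_car])
  have "Apow P N = Apow (du_x \<alpha> \<beta>) N"
    using aut_Apow[OF aut x_car, of N] Oz_fix[OF phi x_central[OF N h]] by (simp add: P_def)
  then have "OpA P ^^ N = letter 0 ^^ N" using OpA_Apow[OF Pc, of N] OpA_Apow[OF x_car, of N] by (simp add: OpA_x_fun)
  then have pw: "(OpA P ^^ N) (dl 0 1) = dl (int N * 1) 1"
    by (simp add: fun_eq_iff L0pow dl_def rhom_one[OF rhom_sigpow] rhom_zero[OF rhom_sigpow] del: funpow.simps)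
  obtain r where r: "\<And>g k. OpA P g k = r * sig (g (k - 1))"
    using shape[OF Pc N _ pw] by (auto simp: spow_1')
  have it: "(OpA P ^^ n) (dl 0 1) = dl (int n) (((\<lambda>s. r * sig s) ^^ n) 1)" for n
  proof (induction n)
    case 0 then show ?case by simp
  next
    case (Suc n)
    then show ?case by (simp add: fun_eq_iff r dl_def del: funpow.simps) (simp add: algebra_simps)
  qed
  have "((\<lambda>s. r * sig s) ^^ N) 1 = 1" using it[of N] pw by (simp add: fun_eq_iff dl_def) (metis)
  moreover obtain m where m: "N = Suc m" using N by (cases N) auto
  ultimately have "r * sig (((\<lambda>s. r * sig s) ^^ m) 1) = 1" by simp
  then obtain c where c: "r = C0 c" using unit_C0 by blast
  have "P = du_smul \<alpha> \<beta> c (du_x \<alpha> \<beta>)"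
  proof (rule inj_OpA[OF Pc smul_car[OF x_car]])
    show "OpA P (dl 0 1) = OpA (du_smul \<alpha> \<beta> c (du_x \<alpha> \<beta>)) (dl 0 1)"
      by (rule ext) (simp add: r c OpA_smul[OF x_car] OpA_x letter0_eq)
  qed
  then show ?thesis by (auto simp: P_def)
qed

lemma phi_y:
  assumes phi: "\<phi> \<in> du_Oz \<alpha> \<beta>" and N: "N \<ge> 1" and h: "(sig ^^ N) vv = vv"
  shows "\<exists>c. \<phi> (du_y \<alpha> \<beta>) = du_smul \<alpha> \<beta> c (du_y \<alpha> \<beta>)"
proof -
  define P where "P = \<phi> (du_y \<alpha> \<beta>)"
  have aut: "du_is_aut \<alpha> \<beta> \<phi>" by (rule Oz_aut[OF phi])
  have Pc: "P \<in> car" unfolding P_def by (rule aut_car[OF aut y_car])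
  have "Apow P N = Apow (du_y \<alpha> \<beta>) N"
    using aut_Apow[OF aut y_car, of N] Oz_fix[OF phi y_central[OF N h]] by (simp add: P_def)
  then have "OpA P ^^ N = letter 1 ^^ N" using OpA_Apow[OF Pc, of N] OpA_Apow[OF y_car, of N] by (simp add: OpA_y_fun)
  then have pw: "(OpA P ^^ N) (dl 0 1) = dl (int N * -1) (Qf N)"
    by (simp add: fun_eq_iff L1pow dl_def rhom_one[OF rhom_sinvpow] rhom_zero[OF rhom_sinvpow] del: funpow.simps)
  obtain r where r: "\<And>g k. OpA P g k = r * sinv (g (k + 1))"
    using shape[OF Pc N _ pw Q_nz] by (auto simp: spow_m1)
  obtain s where s: "OpA P (dl 0 1) (-1) = vv * s" using nf_div[OF Pc] by blast
  then have rs: "r = vv * s" by (simp add: r dl_def)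
  have it: "(OpA P ^^ n) (dl 0 1) = dl (- int n) (((\<lambda>t. r * sinv t) ^^ n) 1)" for n
  proof (induction n)
    case 0 then show ?case by simp
  next
    case (Suc n)
    then show ?case by (simp add: fun_eq_iff r dl_def del: funpow.simps) (simp add: algebra_simps)
  qed
  have fac: "((\<lambda>t. r * sinv t) ^^ n) 1 = Qf n * ((\<lambda>t. s * sinv t) ^^ n) 1" for n
    by (induction n) (simp_all add: rs algebra_simps)
  have "((\<lambda>t. r * sinv t) ^^ N) 1 = Qf N" using it[of N] pw by (simp add: fun_eq_iff dl_def) (metis)
  then have "Qf N * ((\<lambda>t. s * sinv t) ^^ N) 1 = Qf N * 1" by (simp add: fac)
  then have "((\<lambda>t. s * sinv t) ^^ N) 1 = 1" using mult_left_cancel[OF Q_nz[of N]] by simp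
  moreover obtain m where m: "N = Suc m" using N by (cases N) auto
  ultimately have "s * sinv (((\<lambda>t. s * sinv t) ^^ m) 1) = 1" by simp
  then obtain c where c: "s = C0 c" using unit_C0 by blast
  have "P = du_smul \<alpha> \<beta> c (du_y \<alpha> \<beta>)"
  proof (rule inj_OpA[OF Pc smul_car[OF y_car]])
    show "OpA P (dl 0 1) = OpA (du_smul \<alpha> \<beta> c (du_y \<alpha> \<beta>)) (dl 0 1)"
      by (rule ext) (simp add: r rs c OpA_smul[OF y_car] OpA_y letter1_eq algebra_simps)
  qed
  then show ?thesis by (auto simp: P_def)
qed

end

context du
begin

lemma words_single': "set w \<subseteq> {0,1} \<Longrightarrow> Poly_Mapping.single w c \<in> W" by (rule words_single)

lemma cls_add: "p \<in> W \<Longrightarrow> q \<in> W \<Longrightarrow> cls (p + q) = du_add \<alpha> \<beta> (cls p) (cls q)"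
  by (rule inj_OpA) (auto simp: car_cls words_add add_car OpA_add OpA_cls Op_add fun_eq_iff)

lemma cls_zero: "cls 0 = du_smul \<alpha> \<beta> 0 (du_one \<alpha> \<beta>)"
  by (rule inj_OpA) (auto simp: car_cls words_zero smul_car one_car OpA_smul OpA_cls OpA_one C0_0 fun_eq_iff)

lemma cls_nil: "cls (Poly_Mapping.single [] c) = du_smul \<alpha> \<beta> c (du_one \<alpha> \<beta>)"
  by (rule inj_OpA) (auto simp: car_cls words_single smul_car one_car OpA_smul OpA_cls OpA_one Op_single fun_eq_iff)

lemma cls_cons0: "set w \<subseteq> {0,1} \<Longrightarrow> cls (Poly_Mapping.single (0 # w) c) = du_mult \<alpha> \<beta> (du_x \<alpha> \<beta>) (cls (Poly_Mapping.single w c))"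
proof (rule inj_OpA)
  assume w: "set w \<subseteq> {0,1}"
  show "cls (Poly_Mapping.single (0 # w) c) \<in> car" using w by (intro car_cls words_single) auto
  show "du_mult \<alpha> \<beta> (du_x \<alpha> \<beta>) (cls (Poly_Mapping.single w c)) \<in> car"
    using w by (intro mult_car x_car car_cls words_single)
  have a: "OpA (cls (Poly_Mapping.single (0 # w) c)) g = (\<lambda>n. C0 c * letter 0 (opw w g) n)" for g
    using w by (subst OpA_cls) (auto intro!: words_single simp: Op_single fun_eq_iff)
  have b: "OpA (cls (Poly_Mapping.single w c)) g = (\<lambda>n. C0 c * opw w g n)" for g
    using w by (subst OpA_cls) (auto intro!: words_single simp: Op_single fun_eq_iff)
  show "OpA (cls (Poly_Mapping.single (0 # w) c)) (dl 0 1) = OpA (du_mult \<alpha> \<beta> (du_x \<alpha> \<beta>) (cls (Poly_Mapping.single w c))) (dl 0 1)"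
    using w by (subst OpA_mult) (auto intro!: x_car car_cls words_single simp: a b OpA_x letter_scal)
qed

lemma cls_cons1: "set w \<subseteq> {0,1} \<Longrightarrow> cls (Poly_Mapping.single (Suc 0 # w) c) = du_mult \<alpha> \<beta> (du_y \<alpha> \<beta>) (cls (Poly_Mapping.single w c))"
proof (rule inj_OpA)
  assume w: "set w \<subseteq> {0,1}"
  show "cls (Poly_Mapping.single (Suc 0 # w) c) \<in> car" using w by (intro car_cls words_single) auto
  show "du_mult \<alpha> \<beta> (du_y \<alpha> \<beta>) (cls (Poly_Mapping.single w c)) \<in> car"
    using w by (intro mult_car y_car car_cls words_single)
  have a: "OpA (cls (Poly_Mapping.single (Suc 0 # w) c)) g = (\<lambda>n. C0 c * letter (Suc 0) (opw w g) n)" for g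
    using w by (subst OpA_cls) (auto intro!: words_single simp: Op_single fun_eq_iff)
  have b: "OpA (cls (Poly_Mapping.single w c)) g = (\<lambda>n. C0 c * opw w g n)" for g
    using w by (subst OpA_cls) (auto intro!: words_single simp: Op_single fun_eq_iff)
  show "OpA (cls (Poly_Mapping.single (Suc 0 # w) c)) (dl 0 1) = OpA (du_mult \<alpha> \<beta> (du_y \<alpha> \<beta>) (cls (Poly_Mapping.single w c))) (dl 0 1)"
    using w by (subst OpA_mult) (auto intro!: y_car car_cls words_single simp: a b OpA_y_fun letter_scal)
qed

definition homlike :: "('k ncpoly set \<Rightarrow> 'k ncpoly set) \<Rightarrow> bool" where
  "homlike F \<longleftrightarrow> (\<forall>P\<in>car. F P \<in> car)
     \<and> (\<forall>P\<in>car. \<forall>Q\<in>car. F (du_add \<alpha> \<beta> P Q) = du_add \<alpha> \<beta> (F P) (F Q)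
                        \<and> F (du_mult \<alpha> \<beta> P Q) = du_mult \<alpha> \<beta> (F P) (F Q))
     \<and> (\<forall>c. \<forall>P\<in>car. F (du_smul \<alpha> \<beta> c P) = du_smul \<alpha> \<beta> c (F P))
     \<and> F (du_one \<alpha> \<beta>) = du_one \<alpha> \<beta>"

lemma hom_agree:
  assumes F: "homlike F" and G: "homlike G"
    and x: "F (du_x \<alpha> \<beta>) = G (du_x \<alpha> \<beta>)" and y: "F (du_y \<alpha> \<beta>) = G (du_y \<alpha> \<beta>)"
    and P: "P \<in> car"
  shows "F P = G P"
proof -
  have single: "F (cls (Poly_Mapping.single w c)) = G (cls (Poly_Mapping.single w c))" if "set w \<subseteq> {0,1}" for w c
    using that
  proof (induction w)
    case Nil
    show ?case using F G one_car by (simp add: cls_nil homlike_def)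
  next
    case (Cons a w)
    then have w: "set w \<subseteq> {0,1}" and a: "a = 0 \<or> a = Suc 0" by auto
    have cw: "cls (Poly_Mapping.single w c) \<in> car" by (rule car_cls[OF words_single[OF w]])
    show ?case
    proof (cases "a = 0")
      case True
      then show ?thesis using F G Cons.IH[OF w] x cw x_car by (simp add: cls_cons0[OF w] homlike_def)
    next
      case False
      then have "a = Suc 0" using a by simp
      then show ?thesis using F G Cons.IH[OF w] y cw y_car by (simp add: cls_cons1[OF w] homlike_def)
    qed
  qed
  have sums: "F (cls (\<Sum>w\<in>S. Poly_Mapping.single w (f w))) = G (cls (\<Sum>w\<in>S. Poly_Mapping.single w (f w)))"
    if "finite S" "\<forall>w\<in>S. set w \<subseteq> {0,1}" for S f
    using that
  proof (induction S rule: finite_induct)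
    case empty
    show ?case using F G one_car by (simp add: cls_zero homlike_def)
  next
    case (insert x S)
    have w1: "Poly_Mapping.single x (f x) \<in> W" using insert.prems by (intro words_single) auto
    have w2: "(\<Sum>w\<in>S. Poly_Mapping.single w (f w)) \<in> W" using insert.prems by (intro words_sum words_single) auto
    have "cls (\<Sum>w\<in>insert x S. Poly_Mapping.single w (f w)) =
          du_add \<alpha> \<beta> (cls (Poly_Mapping.single x (f x))) (cls (\<Sum>w\<in>S. Poly_Mapping.single w (f w)))"
      using insert.hyps cls_add[OF w1 w2] by simp
    moreover have "F (cls (Poly_Mapping.single x (f x))) = G (cls (Poly_Mapping.single x (f x)))"
      using insert.prems single by auto
    moreover have "F (cls (\<Sum>w\<in>S. Poly_Mapping.single w (f w))) = G (cls (\<Sum>w\<in>S. Poly_Mapping.single w (f w)))"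
      using insert by auto
    ultimately show ?case using F G car_cls[OF w1] car_cls[OF w2] by (simp add: homlike_def)
  qed
  have pW: "rep P \<in> W" by (rule rep_W[OF P])
  have "F (cls (rep P)) = G (cls (rep P))"
    using sums[of "Poly_Mapping.keys (rep P)" "Poly_Mapping.lookup (rep P)"] pW
    by (simp add: du_words_def flip: pm_expand)
  then show ?thesis using cls_rep[OF P] by simp
qed

lemma aut_homlike: "du_is_aut \<alpha> \<beta> \<phi> \<Longrightarrow> homlike \<phi>"
  by (auto simp: du_is_aut_def homlike_def bij_betw_def)

lemma homlike_comp: "homlike F \<Longrightarrow> homlike G \<Longrightarrow> homlike (\<lambda>P. F (G P))"
  unfolding homlike_def by (auto)

lemma smul_smul: "P \<in> car \<Longrightarrow> du_smul \<alpha> \<beta> a (du_smul \<alpha> \<beta> b P) = du_smul \<alpha> \<beta> b (du_smul \<alpha> \<beta> a P)"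
  by (rule inj_OpA) (auto simp: smul_car OpA_smul fun_eq_iff algebra_simps)

lemma Oz_commute:
  assumes phi: "\<phi> \<in> du_Oz \<alpha> \<beta>" and psi: "\<psi> \<in> du_Oz \<alpha> \<beta>"
    and cx: "\<phi> (du_x \<alpha> \<beta>) = du_smul \<alpha> \<beta> a (du_x \<alpha> \<beta>)" "\<psi> (du_x \<alpha> \<beta>) = du_smul \<alpha> \<beta> a' (du_x \<alpha> \<beta>)"
    and cy: "\<phi> (du_y \<alpha> \<beta>) = du_smul \<alpha> \<beta> b (du_y \<alpha> \<beta>)" "\<psi> (du_y \<alpha> \<beta>) = du_smul \<alpha> \<beta> b' (du_y \<alpha> \<beta>)"
    and P: "P \<in> car"
  shows "\<phi> (\<psi> P) = \<psi> (\<phi> P)"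
proof -
  have hp: "homlike \<phi>" "homlike \<psi>" using aut_homlike Oz_aut phi psi by blast+
  have s: "\<phi> (du_smul \<alpha> \<beta> c P) = du_smul \<alpha> \<beta> c (\<phi> P)" "\<psi> (du_smul \<alpha> \<beta> c P) = du_smul \<alpha> \<beta> c (\<psi> P)"
    if "P \<in> car" for c P using hp that by (auto simp: homlike_def)
  show ?thesis
  proof (rule hom_agree[OF homlike_comp[OF hp] homlike_comp[OF hp(2,1)] _ _ P])
    show "\<phi> (\<psi> (du_x \<alpha> \<beta>)) = \<psi> (\<phi> (du_x \<alpha> \<beta>))"
      using cx s x_car smul_smul by simp
    show "\<phi> (\<psi> (du_y \<alpha> \<beta>)) = \<psi> (\<phi> (du_y \<alpha> \<beta>))"
      using cy s y_car smul_smul by simp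
  qed
qed

end

lemma dedekind:
  fixes \<chi> :: "'i \<Rightarrow> 'm \<Rightarrow> 'b::idom" and c :: "'i \<Rightarrow> 'b"
  assumes "finite S" "e \<in> M" "\<forall>m\<in>M. \<forall>m'\<in>M. mul m m' \<in> M"
    "\<forall>i\<in>S. \<chi> i e = 1" "\<forall>i\<in>S. \<forall>m\<in>M. \<forall>m'\<in>M. \<chi> i (mul m m') = \<chi> i m * \<chi> i m'"
    "\<forall>i\<in>S. \<forall>j\<in>S. i \<noteq> j \<longrightarrow> (\<exists>m\<in>M. \<chi> i m \<noteq> \<chi> j m)"
    "\<forall>m\<in>M. (\<Sum>i\<in>S. c i * \<chi> i m) = 0"
  shows "\<forall>i\<in>S. c i = 0"
  using assms
proof (induction "card S" arbitrary: S c rule: less_induct)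
  case less
  show ?case
  proof
    fix i1 assume i1: "i1 \<in> S"
    show "c i1 = 0"
    proof (cases "S = {i1}")
      case True
      have "(\<Sum>i\<in>S. c i * \<chi> i e) = 0" by (rule bspec[OF less.prems(7) less.prems(2)])
      then have "c i1 * \<chi> i1 e = 0" using True by simp
      then show ?thesis using less.prems(4) i1 by simp
    next
      case False
      have "\<exists>i2\<in>S. i2 \<noteq> i1"
      proof (rule ccontr)
        assume "\<not> (\<exists>i2\<in>S. i2 \<noteq> i1)"
        then have "S = {i1}" using i1 by (intro set_eqI) blast
        then show False using False by simp
      qed
      then obtain i2 where i2: "i2 \<in> S" "i2 \<noteq> i1" by blast
      have "\<exists>m\<in>M. \<chi> i1 m \<noteq> \<chi> i2 m" using less.prems(6) i1 i2 by simp
      then obtain m0 where m0: "m0 \<in> M" "\<chi> i1 m0 \<noteq> \<chi> i2 m0" by blast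
      define S' where "S' = S - {i2}"
      define c' where "c' i = c i * (\<chi> i m0 - \<chi> i2 m0)" for i
      have card: "card S' < card S" unfolding S'_def by (rule card_Diff1_less[OF less.prems(1) i2(1)])
      have sum': "\<forall>m\<in>M. (\<Sum>i\<in>S'. c' i * \<chi> i m) = 0"
      proof
        fix m assume m: "m \<in> M"
        have "(\<Sum>i\<in>S'. c' i * \<chi> i m) = (\<Sum>i\<in>S. c i * (\<chi> i m0 - \<chi> i2 m0) * \<chi> i m)"
          unfolding S'_def c'_def using less.prems(1) i2
          by (intro sum.mono_neutral_left) auto
        also have "\<dots> = (\<Sum>i\<in>S. c i * \<chi> i (mul m0 m)) - \<chi> i2 m0 * (\<Sum>i\<in>S. c i * \<chi> i m)"
          using less.prems(5) m0 m by (simp add: sum_distrib_left sum_subtractf algebra_simps)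
        also have "\<dots> = 0" using less.prems(3,7) m0 m by simp
        finally show "(\<Sum>i\<in>S'. c' i * \<chi> i m) = 0" .
      qed
      have "\<forall>i\<in>S'. c' i = 0"
        using less.hyps[OF card, of c'] less.prems sum' by (auto simp: S'_def)
      then have "c i1 * (\<chi> i1 m0 - \<chi> i2 m0) = 0" using i1 i2 by (auto simp: S'_def c'_def)
      then show ?thesis using m0 by simp
    qed
  qed
qed

context du
begin

lemma sig_lin: "sig (lin p q) = lin (p * \<alpha> + q) (p * \<beta>)"
proof -
  have "sig (lin p q) = C0 p * (C0 \<alpha> * uu + C0 \<beta> * vv) + C0 q * uu" by (simp add: lin_def sig_uu)
  also have "\<dots> = (C0 p * C0 \<alpha> + C0 q) * uu + (C0 p * C0 \<beta>) * vv" by (simp add: algebra_simps)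
  also have "\<dots> = lin (p * \<alpha> + q) (p * \<beta>)" by (simp add: lin_def C0_mult C0_add)
  finally show ?thesis .
qed

primrec lv :: "nat \<Rightarrow> 'k \<times> 'k" where
  "lv 0 = (0, 1)"
| "lv (Suc t) = (fst (lv t) * \<alpha> + snd (lv t), fst (lv t) * \<beta>)"

lemma lin01: "lin 0 1 = vv" by (simp add: lin_def C0_0 C0_1)

lemma sigpow_vv: "(sig ^^ t) vv = lin (fst (lv t)) (snd (lv t))"
  by (induction t) (simp_all add: lin01 sig_lin)

lemma lin_eq_iff: "lin p q = lin p' q' \<longleftrightarrow> p = p' \<and> q = q'"
  by (simp add: lin_def C0_def uu_def vv_def)

lemma lin_00: "lin 0 0 = 0" by (simp add: lin_def C0_0)

lemma lv_nz: "lv t \<noteq> (0, 0)"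
proof
  assume "lv t = (0, 0)"
  then have "(sig ^^ t) vv = 0" by (simp add: sigpow_vv lin_00)
  then show False using sig_pow_inj vv_nz by blast
qed

lemma lv_inj:
  assumes H: "\<forall>N\<ge>1. (sig ^^ N) vv \<noteq> vv" and e: "lv t1 = lv t2"
  shows "t1 = t2"
proof (rule ccontr)
  assume ne: "t1 \<noteq> t2"
  have key: "False" if "a < b" "lv a = lv b" for a b
  proof -
    have "(sig ^^ a) vv = (sig ^^ b) vv" using that by (simp add: sigpow_vv)
    also have "(sig ^^ b) vv = (sig ^^ a) ((sig ^^ (b - a)) vv)"
    proof -
      have "(sig ^^ (a + (b - a))) vv = (sig ^^ a) ((sig ^^ (b - a)) vv)" by (simp add: funpow_add)
      moreover have "a + (b - a) = b" using that by simp
      ultimately show ?thesis by simp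
    qed
    finally have "(sinv ^^ a) ((sig ^^ a) vv) = (sinv ^^ a) ((sig ^^ a) ((sig ^^ (b - a)) vv))" by simp
    then have "(sig ^^ (b - a)) vv = vv" by (simp add: sinvpow_sigpow)
    then show False using H that by auto
  qed
  show False using ne e key by (cases "t1 < t2") (auto, metis linorder_neqE_nat)
qed

lemma rhom_const: "rhom (\<lambda>c::'k. [:c:])" by (simp add: rhom_def one_pCons)

lemma proj:
  assumes nz: "(P0, Q0) \<noteq> (0, 0)"
  shows "\<exists>\<pi> :: 'k poly poly \<Rightarrow> 'k poly. rhom \<pi> \<and> (\<forall>p q. \<pi> (1 + lin p q) = 0 \<longleftrightarrow> p = P0 \<and> q = Q0)"
proof -
  have ev: "eval2 (\<lambda>c. [:c:]) A B (1 + lin p q) = 1 + [:p:] * A + [:q:] * B" for A B p q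
    using rhom_eval2[OF rhom_const, of A B]
    by (simp add: lin_def rhom_add rhom_mult rhom_one eval2_C0[OF rhom_const] eval2_uu[OF rhom_const] eval2_vv[OF rhom_const])
  show ?thesis
  proof (cases "Q0 = 0")
    case False
    let ?\<pi> = "eval2 (\<lambda>c. [:c:]) [:0, 1:] [:-1/Q0, -P0/Q0:]"
    have "?\<pi> (1 + lin p q) = 0 \<longleftrightarrow> p = P0 \<and> q = Q0" for p q
    proof -
      have "?\<pi> (1 + lin p q) = [:1 - q / Q0, p - q * P0 / Q0:]"
        unfolding ev by (simp add: one_pCons algebra_simps)
      also have "\<dots> = 0 \<longleftrightarrow> p = P0 \<and> q = Q0" using False by (auto simp: field_simps)
      finally show ?thesis .
    qed
    then show ?thesis using rhom_eval2[OF rhom_const] by blast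
  next
    case True
    then have P0: "P0 \<noteq> 0" using nz by simp
    let ?\<pi> = "eval2 (\<lambda>c. [:c:]) [:-1/P0:] [:0, 1:]"
    have "?\<pi> (1 + lin p q) = 0 \<longleftrightarrow> p = P0 \<and> q = Q0" for p q
    proof -
      have "?\<pi> (1 + lin p q) = [:1 - p / P0, q:]"
        unfolding ev by (simp add: one_pCons algebra_simps)
      also have "\<dots> = 0 \<longleftrightarrow> p = P0 \<and> q = Q0" using P0 True by (auto simp: field_simps)
      finally show ?thesis .
    qed
    then show ?thesis using rhom_eval2[OF rhom_const] by blast
  qed
qed

primrec chi :: "nat list \<Rightarrow> (nat \<Rightarrow> 'k poly poly) \<Rightarrow> 'k poly poly" where
  "chi [] g = 1"
| "chi (i # w) g = g i * sig (chi w g)"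

lemma chi_prod: "chi w g = (\<Prod>t<length w. (sig ^^ t) (g (w ! t)))"
proof (induction w)
  case Nil then show ?case by simp
next
  case (Cons i w)
  have "chi (i # w) g = g i * (\<Prod>t<length w. sig ((sig ^^ t) (g (w ! t))))"
    using Cons by (simp add: rhom_prod[OF rhom_sig])
  also have "\<dots> = (\<Prod>t<length (i # w). (sig ^^ t) (g ((i # w) ! t)))"
    by (simp add: prod.lessThan_Suc_shift del: prod.lessThan_Suc)
  finally show ?case .
qed

lemma chi_mult: "chi w (\<lambda>i. g i * h i) = chi w g * chi w h"
  by (induction w) (simp_all add: algebra_simps)

lemma chi_one: "chi w (\<lambda>i. 1) = 1"
  by (induction w) simp_all

lemma chi_distinct:
  assumes H: "\<forall>N\<ge>1. (sig ^^ N) vv \<noteq> vv" and ne: "w \<noteq> w'" and len: "length w = length w'"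
  shows "chi w (\<lambda>j. if j = w ! t0' then 1 + vv else 1) \<noteq> chi w' (\<lambda>j. if j = w ! t0' then 1 + vv else 1)
         \<or> \<not> (t0' < length w \<and> w ! t0' \<noteq> w' ! t0')"
proof (cases "t0' < length w \<and> w ! t0' \<noteq> w' ! t0'")
  case False then show ?thesis by simp
next
  case True
  define L where "L = length w"
  define i0 where "i0 = w ! t0'"
  define g where "g = (\<lambda>j. if j = i0 then 1 + vv else (1 :: 'k poly poly))"
  have t0: "t0' < L" "w' ! t0' \<noteq> i0" using True by (auto simp: L_def i0_def)
  obtain \<pi> :: "'k poly poly \<Rightarrow> 'k poly" where pi: "rhom \<pi>"
    "\<And>p q. \<pi> (1 + lin p q) = 0 \<longleftrightarrow> p = fst (lv t0') \<and> q = snd (lv t0')"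
    using proj[of "fst (lv t0')" "snd (lv t0')"] lv_nz[of t0'] by auto
  have sg: "(sig ^^ t) (g j) = (if j = i0 then 1 + lin (fst (lv t)) (snd (lv t)) else 1)" for t j
    by (simp add: g_def rhom_add[OF rhom_sigpow] rhom_one[OF rhom_sigpow] sigpow_vv)
  have "\<pi> (chi w g) = (\<Prod>t<L. \<pi> ((sig ^^ t) (g (w ! t))))"
    by (simp add: chi_prod rhom_prod[OF pi(1)] L_def)
  also have "\<dots> = 0"
  proof (rule prod_zero)
    show "finite {..<L}" by simp
    show "\<exists>t\<in>{..<L}. \<pi> ((sig ^^ t) (g (w ! t))) = 0"
      using t0 pi(2) by (intro bexI[of _ t0']) (auto simp: sg i0_def)
  qed
  finally have z: "\<pi> (chi w g) = 0" .
  have "\<pi> (chi w' g) = (\<Prod>t<L. \<pi> ((sig ^^ t) (g (w' ! t))))"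
    by (simp add: chi_prod rhom_prod[OF pi(1)] L_def len)
  also have "\<dots> \<noteq> 0"
  proof -
    have "\<pi> ((sig ^^ t) (g (w' ! t))) \<noteq> 0" if "t < L" for t
    proof (cases "w' ! t = i0")
      case True
      then have "t \<noteq> t0'" using t0 by auto
      then have "lv t \<noteq> lv t0'" using lv_inj[OF H] by blast
      then show ?thesis using True pi(2) by (auto simp: sg prod_eq_iff)
    next
      case False
      then show ?thesis using pi(1) by (simp add: sg rhom_one)
    qed
    then show ?thesis by (simp add: prod_zero_iff)
  qed
  finally show ?thesis using z by (auto simp: g_def i0_def)
qed

definition Gm :: "'k poly poly set" where
  "Gm = {r. \<exists>t\<in>W. Op t = (\<lambda>h k. r * h k)}"

lemma Gm_one: "1 \<in> Gm"
  unfolding Gm_def using words_nc_one by (auto simp: Op_one fun_eq_iff intro!: bexI[of _ nc_one])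

lemma Gm_mult: "r \<in> Gm \<Longrightarrow> r' \<in> Gm \<Longrightarrow> r * r' \<in> Gm"
proof -
  assume "r \<in> Gm" "r' \<in> Gm"
  then obtain t t' where t: "t \<in> W" "Op t = (\<lambda>h k. r * h k)" and t': "t' \<in> W" "Op t' = (\<lambda>h k. r' * h k)"
    by (auto simp: Gm_def)
  have "Op (nc_mult t t') = (\<lambda>h k. (r * r') * h k)"
    by (simp add: fun_eq_iff Op_mult t t' algebra_simps)
  then show ?thesis unfolding Gm_def using words_mult[OF t(1) t'(1)] by blast
qed

lemma Gm_h: "1 + vv \<in> Gm"
proof -
  let ?t = "nc_one + Poly_Mapping.single [Suc 0, 0] 1"
  have tW: "?t \<in> W" by (intro words_add words_nc_one words_single) auto
  have "Op ?t = (\<lambda>h k. (1 + vv) * h k)"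
    by (simp add: fun_eq_iff Op_add Op_one Op_single C0_1 letter1_eq letter0_eq algebra_simps)
  then show ?thesis unfolding Gm_def using tW by blast
qed

lemma PI_order:
  assumes PI: "du_PI \<alpha> \<beta>"
  shows "\<exists>N\<ge>1. (sig ^^ N) vv = vv"
proof (rule ccontr)
  assume "\<not> (\<exists>N\<ge>1. (sig ^^ N) vv = vv)"
  then have H: "\<forall>N\<ge>1. (sig ^^ N) vv \<noteq> vv" by blast
  obtain f :: "'k ncpoly" where f: "f \<noteq> 0" "\<And>s. (\<forall>i. s i \<in> W) \<Longrightarrow> nc_subst s f \<in> I"
    using PI by (auto simp: du_PI_def)
  define M where "M = {g :: nat \<Rightarrow> 'k poly poly. \<forall>i. g i \<in> Gm}"
  define ts where "ts g i = (SOME t. t \<in> W \<and> Op t = (\<lambda>h k. g i * h k))" for g :: "nat \<Rightarrow> 'k poly poly" and i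
  have ts: "ts g i \<in> W \<and> Op (ts g i) = (\<lambda>h k. g i * h k)" if "g \<in> M" for g i
  proof -
    have "\<exists>t. t \<in> W \<and> Op t = (\<lambda>h k. g i * h k)" using that by (auto simp: M_def Gm_def)
    then show ?thesis unfolding ts_def by (rule someI_ex)
  qed
  define sb where "sb g i = nc_mult (ts g i) (nc_var 0)" for g i
  have sbW: "sb g i \<in> W" if "g \<in> M" for g i
    unfolding sb_def by (intro words_mult words_var0 ts[OF that, THEN conjunct1])
  have Opsb: "Op (sb g i) h k = g i * sig (h (k - 1))" if "g \<in> M" for g i h k
    unfolding sb_def using ts[OF that] by (simp add: Op_mult Op_var0 letter0_eq)
  have fold: "Op (List.foldr (\<lambda>i acc. nc_mult (sb g i) acc) w nc_one) (dl 0 1) = dl (int (length w)) (chi w g)"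
    if "g \<in> M" for g w
  proof (induction w)
    case Nil then show ?case by (simp add: Op_one)
  next
    case (Cons i w)
    show ?case by (rule ext) (simp add: Op_mult Opsb[OF that] Cons, simp add: dl_def)
  qed
  have key: "(\<Sum>w\<in>{w\<in>Poly_Mapping.keys f. length w = L}. C0 (Poly_Mapping.lookup f w) * chi w g) = 0"
    if "g \<in> M" for g L
  proof -
    have "nc_subst (sb g) f \<in> I" using f(2) sbW[OF that] by blast
    then have "Op (nc_subst (sb g) f) (dl 0 1) (int L) = 0" using Op_ideal by simp
    moreover have "Op (nc_subst (sb g) f) (dl 0 1) (int L) =
       (\<Sum>w\<in>Poly_Mapping.keys f. C0 (Poly_Mapping.lookup f w) * dl (int (length w)) (chi w g) (int L))"
      unfolding nc_subst_def by (simp add: Op_sum Op_smul fold[OF that])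
    moreover have "(\<Sum>w\<in>Poly_Mapping.keys f. C0 (Poly_Mapping.lookup f w) * dl (int (length w)) (chi w g) (int L))
        = (\<Sum>w\<in>{w\<in>Poly_Mapping.keys f. length w = L}. C0 (Poly_Mapping.lookup f w) * chi w g)"
      by (simp add: dl_def sum.inter_filter[symmetric] if_distrib cong: if_cong) (intro sum.cong; auto)
    ultimately show ?thesis by simp
  qed
  obtain w0 where w0: "w0 \<in> Poly_Mapping.keys f" using f(1) by (metis keys_eq_empty equals0I)
  define S where "S = {w\<in>Poly_Mapping.keys f. length w = length w0}"
  have "\<forall>w\<in>S. C0 (Poly_Mapping.lookup f w) = 0"
  proof (rule dedekind[where M = M and e = "\<lambda>i. 1" and mul = "\<lambda>g h i. g i * h i" and \<chi> = chi])
    show "finite S" by (simp add: S_def)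
    show "(\<lambda>i. 1) \<in> M" by (simp add: M_def Gm_one)
    show "\<forall>m\<in>M. \<forall>m'\<in>M. (\<lambda>i. m i * m' i) \<in> M" by (simp add: M_def Gm_mult)
    show "\<forall>i\<in>S. chi i (\<lambda>i. 1) = 1" by (simp add: chi_one)
    show "\<forall>i\<in>S. \<forall>m\<in>M. \<forall>m'\<in>M. chi i (\<lambda>ia. m ia * m' ia) = chi i m * chi i m'" by (simp add: chi_mult)
    show "\<forall>m\<in>M. (\<Sum>i\<in>S. C0 (Poly_Mapping.lookup f i) * chi i m) = 0" using key by (simp add: S_def)
    show "\<forall>i\<in>S. \<forall>j\<in>S. i \<noteq> j \<longrightarrow> (\<exists>m\<in>M. chi i m \<noteq> chi j m)"
    proof (intro ballI impI)
      fix w w' assume w: "w \<in> S" "w' \<in> S" "w \<noteq> w'"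
      then have len: "length w = length w'" by (simp add: S_def)
      obtain t0 where t0: "t0 < length w" "w ! t0 \<noteq> w' ! t0"
        using w(3) len nth_equalityI by blast
      have gM: "(\<lambda>j. if j = w ! t0 then 1 + vv else 1) \<in> M" by (simp add: M_def Gm_one Gm_h)
      show "\<exists>m\<in>M. chi w m \<noteq> chi w' m"
        using chi_distinct[OF H w(3) len, of t0] t0 gM by blast
    qed
  qed
  then have "C0 (Poly_Mapping.lookup f w0) = 0" using w0 by (simp add: S_def)
  then show False using w0 by (simp add: C0_def in_keys_iff)
qed

end

theorem corollary4p7:
  fixes \<alpha> \<beta> :: "'k::field_char_0"
  assumes "\<beta> \<noteq> 0"
    and "du_noetherian \<alpha> \<beta>"
    and "du_PI \<alpha> \<beta>"
  shows "(\<forall>\<phi>\<in>du_Oz \<alpha> \<beta>.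
            (\<exists>c. \<phi> (du_x \<alpha> \<beta>) = du_smul \<alpha> \<beta> c (du_x \<alpha> \<beta>))
          \<and> (\<exists>c. \<phi> (du_y \<alpha> \<beta>) = du_smul \<alpha> \<beta> c (du_y \<alpha> \<beta>)))
       \<and> (\<forall>\<phi>\<in>du_Oz \<alpha> \<beta>. \<forall>\<psi>\<in>du_Oz \<alpha> \<beta>. \<forall>P\<in>du_carrier \<alpha> \<beta>. \<phi> (\<psi> P) = \<psi> (\<phi> P))"
proof -
  interpret du \<alpha> \<beta> using assms(1) by unfold_locales
  obtain N where N: "N \<ge> 1" "(sig ^^ N) vv = vv" using PI_order[OF assms(3)] by blast
  have diag: "(\<exists>c. \<phi> (du_x \<alpha> \<beta>) = du_smul \<alpha> \<beta> c (du_x \<alpha> \<beta>))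
          \<and> (\<exists>c. \<phi> (du_y \<alpha> \<beta>) = du_smul \<alpha> \<beta> c (du_y \<alpha> \<beta>))" if "\<phi> \<in> du_Oz \<alpha> \<beta>" for \<phi>
    using phi_x[OF that N] phi_y[OF that N] by blast
  have comm: "\<phi> (\<psi> P) = \<psi> (\<phi> P)" if hyp: "\<phi> \<in> du_Oz \<alpha> \<beta>" "\<psi> \<in> du_Oz \<alpha> \<beta>" "P \<in> du_carrier \<alpha> \<beta>" for \<phi> \<psi> P
  proof -
    obtain a b where ab: "\<phi> (du_x \<alpha> \<beta>) = du_smul \<alpha> \<beta> a (du_x \<alpha> \<beta>)" "\<phi> (du_y \<alpha> \<beta>) = du_smul \<alpha> \<beta> b (du_y \<alpha> \<beta>)"
      using diag[OF hyp(1)] by blast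
    obtain a' b' where ab': "\<psi> (du_x \<alpha> \<beta>) = du_smul \<alpha> \<beta> a' (du_x \<alpha> \<beta>)" "\<psi> (du_y \<alpha> \<beta>) = du_smul \<alpha> \<beta> b' (du_y \<alpha> \<beta>)"
      using diag[OF hyp(2)] by blast
    show ?thesis by (rule Oz_commute[OF hyp(1,2) ab(1) ab'(1) ab(2) ab'(2) hyp(3)])
  qed
  show ?thesis using diag comm by blast
qed


end
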